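(* Let $d\in\mathbb{N}$. The tent transform $\mathcal{R}$, $\mathcal{R}f(y_1,\dots,y_d)=f(|2y_1-1|,\dots,|2y_d-1|)$, is a continuous mapping from $H^2_{\mathrm{mix}}([0,1]^d)$ to the classical Korobov space $\mathbf{E}^2_d$: there is $C>0$ depending only on $d$ with $\sup_{\mathbf{k}\in\mathbb{Z}^d}|\widehat{\mathcal{R}f}(\mathbf{k})|\prod_{i=1}^d(1+|k_i|)^2\le C\|f\|_{H^2_{\mathrm{mix}}([0,1]^d)}$ for all $f\in H^2_{\mathrm{mix}}([0,1]^d)$.
   Context: $H^2_{\mathrm{mix}}([0,1]^d)$ is the $d$-fold Hilbert tensor product of $H^2([0,1])=\{f\in L_2([0,1]):f''\in L_2([0,1])\}$ with norm $\|f\|^2=\|f\|^2_{L_2}+\|f''\|^2_{L_2}$; equivalently the real functions $f$ on $[0,1]^d$ with $\big(\prod_{i\in e}\partial^2/\partial x_i^2\big)f\in L_2([0,1]^d)$ (weak derivatives) for all $e\subseteq\{1,\dots,d\}$, normed by the square root of the sum of the squared $L_2$-norms of these derivatives. $\mathbb{T}^d$ is identified with $[0,1)^d$; for $g\in L_1(\mathbb{T}^d)$, $\hat g(\mathbf{k})=\int_{[0,1]^d}g(\mathbf{x})e^{-2\pi i\mathbf{k}^\top\mathbf{x}}\,d\mathbf{x}$. The classical Korobov space $\mathbf{E}^2_d=\mathbf{E}^2(\mathbb{T}^d)$ consists of the functions $g$ on $\mathbb{T}^d$ with finite norm $\|g\|_{\mathbf{E}^2_d}=\sup_{\mathbf{k}\in\mathbb{Z}^d}|\hat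 g(\mathbf{k})|\prod_{i=1}^d(1+|k_i|)^2$. *)

theory Defs
  imports "HOL-Analysis.Analysis"
begin

text \<open>Unit cube [0,1]^d and its interior, with d = CARD('n).\<close>
definition unit_cube :: "(real^'n::finite) set" where
  "unit_cube = cbox 0 1"

definition open_unit_cube :: "(real^'n::finite) set" where
  "open_unit_cube = box 0 1"

definition partial :: "'n::finite \<Rightarrow> (real^'n \<Rightarrow> real) \<Rightarrow> real^'n \<Rightarrow> real" where
  "partial i \<phi> x = deriv (\<lambda>t. \<phi> (x + t *\<^sub>R axis i 1)) 0"

fun iter_partial :: "'n::finite list \<Rightarrow> (real^'n \<Rightarrow> real) \<Rightarrow> real^'n \<Rightarrow> real" where
  "iter_partial [] \<phi> = \<phi>"
| "iter_partial (i # is) \<phi> = partial i (iter_partial is \<phi>)"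

definition smooth_fun :: "(real^'n::finite \<Rightarrow> real) \<Rightarrow> bool" where
  "smooth_fun \<phi> \<longleftrightarrow>
     (\<forall>is. continuous_on UNIV (iter_partial is \<phi>) \<and>
       (\<forall>i x. (\<lambda>t. iter_partial is \<phi> (x + t *\<^sub>R axis i 1)) differentiable (at 0)))"

definition test_fun :: "(real^'n::finite \<Rightarrow> real) \<Rightarrow> bool" where
  "test_fun \<phi> \<longleftrightarrow> smooth_fun \<phi> \<and>
     (\<exists>K. compact K \<and> K \<subseteq> open_unit_cube \<and> (\<forall>x. x \<notin> K \<longrightarrow> \<phi> x = 0))"

text \<open>The mixed derivative (\<Prod>i\<in>e. \<partial>^2/\<partial>x_i^2) of a smooth function
  (order of differentiation is irrelevant for smooth functions).\<close>
definition mixed_D2 :: "'n::finite set \<Rightarrow> (real^'n \<Rightarrow> real) \<Rightarrow> real^'n \<Rightarrow> real" where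
  "mixed_D2 e \<phi> = iter_partial (concat (map (\<lambda>i. [i, i]) (SOME l. set l = e \<and> distinct l))) \<phi>"

definition L2_cube :: "(real^'n::finite \<Rightarrow> real) \<Rightarrow> bool" where
  "L2_cube f \<longleftrightarrow> f \<in> borel_measurable (lebesgue_on unit_cube) \<and>
     integrable (lebesgue_on unit_cube) (\<lambda>x. (f x)\<^sup>2)"

text \<open>g is the weak derivative (\<Prod>i\<in>e. \<partial>^2/\<partial>x_i^2) f, and lies in L2.
  The sign (-1)^(2|e|) = 1.\<close>
definition is_weak_mixed_D2 ::
  "'n::finite set \<Rightarrow> (real^'n \<Rightarrow> real) \<Rightarrow> (real^'n \<Rightarrow> real) \<Rightarrow> bool" where
  "is_weak_mixed_D2 e f g \<longleftrightarrow> L2_cube g \<and>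
     (\<forall>\<phi>. test_fun \<phi> \<longrightarrow>
        integrable (lebesgue_on unit_cube) (\<lambda>x. f x * mixed_D2 e \<phi> x) \<and>
        integrable (lebesgue_on unit_cube) (\<lambda>x. g x * \<phi> x) \<and>
        integral\<^sup>L (lebesgue_on unit_cube) (\<lambda>x. f x * mixed_D2 e \<phi> x)
          = integral\<^sup>L (lebesgue_on unit_cube) (\<lambda>x. g x * \<phi> x))"

definition H2mix :: "(real^'n::finite \<Rightarrow> real) \<Rightarrow> bool" where
  "H2mix f \<longleftrightarrow> L2_cube f \<and> (\<forall>e. \<exists>g. is_weak_mixed_D2 e f g)"

definition weak_mixed_D2 :: "'n::finite set \<Rightarrow> (real^'n \<Rightarrow> real) \<Rightarrow> real^'n \<Rightarrow> real" where
  "weak_mixed_D2 e f = (SOME g. is_weak_mixed_D2 e f g)"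

definition H2mix_norm :: "(real^'n::finite \<Rightarrow> real) \<Rightarrow> real" where
  "H2mix_norm f = sqrt (\<Sum>e\<in>UNIV. integral\<^sup>L (lebesgue_on unit_cube) (\<lambda>x. (weak_mixed_D2 e f x)\<^sup>2))"

definition tent :: "(real^'n::finite \<Rightarrow> real) \<Rightarrow> real^'n \<Rightarrow> real" where
  "tent f y = f (\<chi> i. \<bar>2 * y$i - 1\<bar>)"

text \<open>Fourier coefficient on the torus identified with [0,1)^d.\<close>
definition fourier_coeff :: "(real^'n::finite \<Rightarrow> real) \<Rightarrow> int^'n \<Rightarrow> complex" where
  "fourier_coeff g k = integral\<^sup>L (lebesgue_on unit_cube)
     (\<lambda>x. complex_of_real (g x) * cis (- 2 * pi * (\<Sum>i\<in>UNIV. of_int (k$i) * x$i)))"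

end

theory Submission
  imports Defs "HOL-Computational_Algebra.Polynomial"
begin

fun Ck :: "nat \<Rightarrow> (real \<Rightarrow> real) \<Rightarrow> bool" where
  "Ck 0 f = True"
| "Ck (Suc k) f = ((\<forall>x. f differentiable (at x)) \<and> Ck k (deriv f))"

definition smooth1 :: "(real \<Rightarrow> real) \<Rightarrow> bool" where
  "smooth1 f \<longleftrightarrow> (\<forall>k. Ck k f)"

lemma Ck_Suc_mono: "Ck (Suc k) f \<Longrightarrow> Ck k f"
proof (induction k arbitrary: f)
  case 0 then show ?case by simp
next
  case (Suc k) then show ?case by auto
qed

lemma deriv_has: "f differentiable (at x) \<Longrightarrow> (f has_real_derivative deriv f x) (at x)"
  using DERIV_deriv_iff_real_differentiable by blast

lemma Ck_cong: "Ck k f \<Longrightarrow> f = g \<Longrightarrow> Ck k g" by simp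

lemma Ck_const: "Ck k (\<lambda>x. c)"
proof (induction k arbitrary: c)
  case 0 then show ?case by simp
next
  case (Suc k)
  have "deriv (\<lambda>x. c) = (\<lambda>x. 0)" by (rule ext) simp
  then show ?case using Suc by simp
qed

lemma Ck_add: "Ck k f \<Longrightarrow> Ck k g \<Longrightarrow> Ck k (\<lambda>x. f x + g x)"
proof (induction k arbitrary: f g)
  case 0 then show ?case by simp
next
  case (Suc k)
  have d: "deriv (\<lambda>x. f x + g x) = (\<lambda>x. deriv f x + deriv g x)"
  proof
    fix x show "deriv (\<lambda>x. f x + g x) x = deriv f x + deriv g x"
      using Suc.prems by (intro DERIV_imp_deriv DERIV_add deriv_has) auto
  qed
  show ?case using Suc by (auto simp: d)
qed

lemma Ck_mult: "Ck k f \<Longrightarrow> Ck k g \<Longrightarrow> Ck k (\<lambda>x. f x * g x)"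
proof (induction k arbitrary: f g)
  case 0 then show ?case by simp
next
  case (Suc k)
  have d: "deriv (\<lambda>x. f x * g x) = (\<lambda>x. deriv f x * g x + f x * deriv g x)"
  proof
    fix x show "deriv (\<lambda>x. f x * g x) x = deriv f x * g x + f x * deriv g x"
    proof -
      have "(f has_real_derivative deriv f x) (at x)" "(g has_real_derivative deriv g x) (at x)"
        using Suc.prems by (auto intro: deriv_has)
      from DERIV_mult[OF this] show ?thesis by (intro DERIV_imp_deriv) (simp add: algebra_simps)
    qed
  qed
  have "Ck k f" "Ck k g" using Suc.prems Ck_Suc_mono by blast+
  then have "Ck k (\<lambda>x. deriv f x * g x + f x * deriv g x)"
    using Suc.prems by (intro Ck_add Suc.IH) auto
  then show ?case using Suc.prems by (simp add: d)
qed

lemma Ck_inverse: "Ck k g \<Longrightarrow> (\<forall>x. g x \<noteq> 0) \<Longrightarrow> Ck k (\<lambda>x. inverse (g x))"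
proof (induction k arbitrary: g)
  case 0 then show ?case by simp
next
  case (Suc k)
  have d: "deriv (\<lambda>x. inverse (g x)) = (\<lambda>x. - (deriv g x * (inverse (g x) * inverse (g x))))"
  proof
    fix x show "deriv (\<lambda>x. inverse (g x)) x = - (deriv g x * (inverse (g x) * inverse (g x)))"
    proof -
      have "(g has_real_derivative deriv g x) (at x)"
        using Suc.prems by (auto intro: deriv_has)
      from DERIV_inverse_fun[OF this] Suc.prems show ?thesis
        by (intro DERIV_imp_deriv) (simp add: power2_eq_square)
    qed
  qed
  have dif: "\<forall>x. (\<lambda>x. inverse (g x)) differentiable (at x)"
    using Suc.prems by (auto intro!: derivative_intros)
  have "Ck k g" using Suc.prems Ck_Suc_mono by blast
  then have "Ck k (\<lambda>x. inverse (g x))" using Suc by blast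
  then have "Ck k (\<lambda>x. - (deriv g x * (inverse (g x) * inverse (g x))))"
    using Suc.prems by (auto intro!: Ck_mult Ck_const
       simp: minus_mult_left[symmetric] intro: Ck_mult[of k "\<lambda>x. - 1", simplified])
  then show ?case using dif d by simp
qed

lemma Ck_affine: "Ck k f \<Longrightarrow> Ck k (\<lambda>x. f (a * x + b))"
proof (induction k arbitrary: f)
  case 0 then show ?case by simp
next
  case (Suc k)
  have d: "deriv (\<lambda>x. f (a * x + b)) = (\<lambda>x. a * deriv f (a * x + b))"
  proof
    fix x
    have "((\<lambda>x. f (a * x + b)) has_real_derivative deriv f (a * x + b) * a) (at x)"
      using Suc.prems by (intro DERIV_chain2[where f=f] deriv_has) (auto intro!: derivative_eq_intros)
    then show "deriv (\<lambda>x. f (a * x + b)) x = a * deriv f (a * x + b)"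
      by (simp add: DERIV_imp_deriv mult.commute)
  qed
  have dif: "\<forall>x. (\<lambda>x. f (a * x + b)) differentiable (at x)"
  proof
    fix x
    have "((\<lambda>x. f (a * x + b)) has_real_derivative deriv f (a * x + b) * a) (at x)"
      using Suc.prems by (intro DERIV_chain2[where f=f] deriv_has) (auto intro!: derivative_eq_intros)
    then show "(\<lambda>x. f (a * x + b)) differentiable (at x)" using real_differentiable_def by blast
  qed
  have "Ck k (\<lambda>x. deriv f (a * x + b))" using Suc by simp
  then show ?case using dif d by (auto intro!: Ck_mult Ck_const)
qed

lemma Ck_sincos: "Ck k sin \<and> Ck k cos"
proof (induction k)
  case 0 then show ?case by simp
next
  case (Suc k)
  have d1: "deriv sin = cos" by (rule ext) (simp add: DERIV_imp_deriv DERIV_sin)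
  have d2: "deriv cos = (\<lambda>x. - sin x)" by (rule ext) (simp add: DERIV_imp_deriv DERIV_cos)
  have "Ck k (\<lambda>x. - 1 * sin x)" using Suc by (intro Ck_mult Ck_const) auto
  then show ?case using Suc by (auto simp: d1 d2 real_differentiable_def intro: DERIV_sin DERIV_cos)
qed

lemma Ck_id: "Ck k (\<lambda>x. x)"
proof (cases k)
  case 0 then show ?thesis by simp
next
  case (Suc m)
  have "deriv (\<lambda>x. x) = (\<lambda>x. 1)" by (rule ext) simp
  then show ?thesis using Suc by (simp add: Ck_const)
qed

lemma smooth1_const: "smooth1 (\<lambda>x. c)" by (simp add: smooth1_def Ck_const)
lemma smooth1_id: "smooth1 (\<lambda>x. x)" by (simp add: smooth1_def Ck_id)
lemma smooth1_add: "smooth1 f \<Longrightarrow> smooth1 g \<Longrightarrow> smooth1 (\<lambda>x. f x + g x)"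
  by (simp add: smooth1_def Ck_add)
lemma smooth1_mult: "smooth1 f \<Longrightarrow> smooth1 g \<Longrightarrow> smooth1 (\<lambda>x. f x * g x)"
  by (simp add: smooth1_def Ck_mult)
lemma smooth1_inverse: "smooth1 g \<Longrightarrow> (\<forall>x. g x \<noteq> 0) \<Longrightarrow> smooth1 (\<lambda>x. inverse (g x))"
  by (simp add: smooth1_def Ck_inverse)
lemma smooth1_affine: "smooth1 f \<Longrightarrow> smooth1 (\<lambda>x. f (a * x + b))"
  by (simp add: smooth1_def Ck_affine)
lemma smooth1_sin: "smooth1 sin" and smooth1_cos: "smooth1 cos"
  by (simp_all add: smooth1_def Ck_sincos)
lemma smooth1_diff: "smooth1 f \<Longrightarrow> smooth1 g \<Longrightarrow> smooth1 (\<lambda>x. f x - g x)"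
  using smooth1_add[of f "\<lambda>x. (-1) * g x"] smooth1_mult[OF smooth1_const[of "-1"], of g] by simp
lemma smooth1_power: "smooth1 f \<Longrightarrow> smooth1 (\<lambda>x. f x ^ n)"
  by (induction n) (auto intro: smooth1_mult smooth1_const)
lemma smooth1_deriv: "smooth1 f \<Longrightarrow> smooth1 (deriv f)"
  unfolding smooth1_def using Ck.simps(2) by blast
lemma smooth1_differentiable: "smooth1 f \<Longrightarrow> f differentiable (at x)"
  unfolding smooth1_def using Ck.simps(2) by blast
lemma smooth1_DERIV: "smooth1 f \<Longrightarrow> (f has_real_derivative deriv f x) (at x)"
  using smooth1_differentiable deriv_has by blast
lemma smooth1_cont: "smooth1 f \<Longrightarrow> continuous_on A f"
  by (meson continuous_at_imp_continuous_on differentiable_imp_continuous_within smooth1_differentiable)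
lemma smooth1_isCont: "smooth1 f \<Longrightarrow> isCont f x"
  by (simp add: differentiable_imp_continuous_within smooth1_differentiable)
lemma smooth1_funpow: "smooth1 f \<Longrightarrow> smooth1 ((deriv ^^ n) f)"
  by (induction n) (auto intro: smooth1_deriv)

definition Ef :: "real \<Rightarrow> real" where
  "Ef x = (if x > 0 then exp (- inverse x) else 0)"

definition Epoly :: "real poly \<Rightarrow> real \<Rightarrow> real" where
  "Epoly p x = (if x > 0 then poly p (inverse x) * exp (- inverse x) else 0)"

lemma poly_exp_lim: fixes p :: "real poly" shows "((\<lambda>y. poly p y * exp (- y)) \<longlongrightarrow> 0) at_top"
proof -
  have "((\<lambda>y. \<Sum>i\<le>degree p. coeff p i * (y ^ i / exp y)) \<longlongrightarrow> (\<Sum>i\<le>degree p. coeff p i * 0)) at_top"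
    by (intro tendsto_sum tendsto_mult tendsto_const tendsto_power_div_exp_0)
  moreover have "(\<Sum>i\<le>degree p. coeff p i * (y ^ i / exp y)) = poly p y * exp (- y)" for y
  proof -
    have "(\<Sum>i\<le>degree p. coeff p i * (y ^ i / exp y)) = (\<Sum>i\<le>degree p. coeff p i * y ^ i) / exp y"
      by (simp add: sum_divide_distrib)
    also have "\<dots> = poly p y * exp (- y)" by (simp add: poly_altdef exp_minus divide_inverse)
    finally show ?thesis .
  qed
  ultimately show ?thesis by simp
qed

lemma Epoly_deriv0: "(Epoly p has_real_derivative 0) (at 0)"
proof -
  have r: "((\<lambda>x. (Epoly p x - Epoly p 0) / (x - 0)) \<longlongrightarrow> 0) (at_right 0)"
  proof -
    have "((\<lambda>x. poly (pCons 0 p) (inverse x) * exp (- inverse x)) \<longlongrightarrow> 0) (at_right (0::real))"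
      using filterlim_compose[OF poly_exp_lim[of "pCons 0 p"] filterlim_inverse_at_top_right] by (simp add: o_def)
    then show ?thesis
      apply (rule Lim_transform_eventually)
      apply (rule eventually_mono[OF eventually_at_right_less[of 0]])
      by (simp add: Epoly_def divide_inverse)
  qed
  have l: "((\<lambda>x. (Epoly p x - Epoly p 0) / (x - 0)) \<longlongrightarrow> 0) (at_left 0)"
    apply (rule Lim_transform_eventually[OF tendsto_const])
    apply (rule eventually_mono[OF eventually_at_left_real[of "-1" 0]])
    by (auto simp add: Epoly_def)
  show ?thesis
    unfolding has_field_derivative_iff using filterlim_at_split r l by blast
qed

definition Epd :: "real poly \<Rightarrow> real poly" where
  "Epd p = [:0,0,1:] * (p - pderiv p)"

lemma Epoly_deriv: "(Epoly p has_real_derivative Epoly (Epd p) x) (at x)"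
proof (cases "x = 0")
  case True then show ?thesis using Epoly_deriv0 by (simp add: Epoly_def)
next
  case False
  show ?thesis
  proof (cases "x > 0")
    case True
    have "((\<lambda>x. poly p (inverse x) * exp (- inverse x)) has_real_derivative
       poly (pderiv p) (inverse x) * (- inverse (x*x)) * exp (- inverse x) +
       poly p (inverse x) * (exp (- inverse x) * inverse (x*x))) (at x)"
      using True
      by (auto intro!: derivative_eq_intros DERIV_chain2[where f="poly p"] poly_DERIV
          simp: power2_eq_square)
    moreover have "poly (pderiv p) (inverse x) * (- inverse (x*x)) * exp (- inverse x) +
       poly p (inverse x) * (exp (- inverse x) * inverse (x*x)) = Epoly (Epd p) x"
      using True by (simp add: Epoly_def Epd_def algebra_simps power2_eq_square)
    ultimately have "((\<lambda>x. poly p (inverse x) * exp (- inverse x)) has_real_derivative Epoly (Epd p) x) (at x)"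
      by simp
    then show ?thesis
      by (rule has_field_derivative_transform_within_open[where S="{0<..}"]) (use True in \<open>auto simp: Epoly_def\<close>)
  next
    case False
    then have "x < 0" using \<open>x \<noteq> 0\<close> by simp
    have "((\<lambda>x. 0) has_real_derivative 0) (at x)" by simp
    then have "((\<lambda>x. 0) has_real_derivative Epoly (Epd p) x) (at x)" using \<open>x<0\<close> by (simp add: Epoly_def)
    then show ?thesis
      by (rule has_field_derivative_transform_within_open[where S="{..<0}"]) (use \<open>x<0\<close> in \<open>auto simp: Epoly_def\<close>)
  qed
qed

lemma Ck_Epoly: "Ck k (Epoly p)"
proof (induction k arbitrary: p)
  case 0 then show ?case by simp
next
  case (Suc k)
  have "deriv (Epoly p) = Epoly (Epd p)" by (rule ext) (rule DERIV_imp_deriv[OF Epoly_deriv])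
  then show ?case using Suc Epoly_deriv real_differentiable_def by auto
qed

lemma smooth1_Ef: "smooth1 Ef"
proof -
  have "Ef = Epoly 1" by (rule ext) (simp add: Ef_def Epoly_def)
  then show ?thesis unfolding smooth1_def by (metis Ck_Epoly)
qed

lemma deriv_mult_fun: "smooth1 f \<Longrightarrow> smooth1 g \<Longrightarrow>
   deriv (\<lambda>x. f x * g x) = (\<lambda>x. deriv f x * g x + f x * deriv g x)"
proof
  fix x assume "smooth1 f" "smooth1 g"
  from DERIV_mult[OF smooth1_DERIV[OF this(1)] smooth1_DERIV[OF this(2)], of x]
  show "deriv (\<lambda>x. f x * g x) x = deriv f x * g x + f x * deriv g x"
    by (intro DERIV_imp_deriv) (simp add: algebra_simps)
qed

lemma deriv_add_fun: "smooth1 f \<Longrightarrow> smooth1 g \<Longrightarrow>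
   deriv (\<lambda>x. f x + g x) = (\<lambda>x. deriv f x + deriv g x)"
proof
  fix x assume "smooth1 f" "smooth1 g"
  from DERIV_add[OF smooth1_DERIV[OF this(1)] smooth1_DERIV[OF this(2)], of x]
  show "deriv (\<lambda>x. f x + g x) x = deriv f x + deriv g x"
    by (intro DERIV_imp_deriv) (simp add: algebra_simps)
qed

lemma deriv_affine_fun: "smooth1 f \<Longrightarrow> deriv (\<lambda>x. f (a * x + b)) = (\<lambda>x. a * deriv f (a * x + b))"
proof
  fix x assume f: "smooth1 f"
  have "((\<lambda>x. f (a * x + b)) has_real_derivative deriv f (a * x + b) * a) (at x)"
    using f by (intro DERIV_chain2[where f=f] smooth1_DERIV) (auto intro!: derivative_eq_intros)
  then show "deriv (\<lambda>x. f (a * x + b)) x = a * deriv f (a * x + b)"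
    by (simp add: DERIV_imp_deriv mult.commute)
qed

lemma deriv2_mult_fun: "smooth1 f \<Longrightarrow> smooth1 g \<Longrightarrow>
   deriv (deriv (\<lambda>x. f x * g x)) =
   (\<lambda>x. deriv (deriv f) x * g x + 2 * (deriv f x * deriv g x) + f x * deriv (deriv g) x)"
proof -
  assume f: "smooth1 f" and g: "smooth1 g"
  note df = smooth1_deriv[OF f] and dg = smooth1_deriv[OF g]
  have "deriv (deriv (\<lambda>x. f x * g x)) = deriv (\<lambda>x. deriv f x * g x + f x * deriv g x)"
    by (simp add: deriv_mult_fun f g)
  also have "\<dots> = (\<lambda>x. (deriv (deriv f) x * g x + deriv f x * deriv g x) + (deriv f x * deriv g x + f x * deriv (deriv g) x))"
    by (simp add: deriv_add_fun deriv_mult_fun smooth1_mult f g df dg)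
  finally show ?thesis by (simp add: algebra_simps)
qed

definition Sf :: "real \<Rightarrow> real" where
  "Sf x = Ef x * inverse (Ef x + Ef (1 - x))"

lemma Ef_nonneg: "Ef x \<ge> 0" by (simp add: Ef_def)
lemma Ef_pos: "x > 0 \<Longrightarrow> Ef x > 0" by (simp add: Ef_def)
lemma Ef_zero: "x \<le> 0 \<Longrightarrow> Ef x = 0" by (simp add: Ef_def)

lemma Sf_den_pos: "Ef x + Ef (1 - x) > 0"
proof (cases "x > 0")
  case True then show ?thesis using Ef_pos[of x] Ef_nonneg[of "1-x"] by linarith
next
  case False then show ?thesis using Ef_pos[of "1-x"] Ef_nonneg[of x] by linarith
qed

lemma smooth1_Sf: "smooth1 Sf"
proof -
  have "smooth1 (\<lambda>x. Ef ((-1) * x + 1))" by (rule smooth1_affine[OF smooth1_Ef])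
  then have "smooth1 (\<lambda>x. Ef x + Ef (1 - x))" using smooth1_add[OF smooth1_Ef] by simp
  then have "smooth1 (\<lambda>x. inverse (Ef x + Ef (1 - x)))"
    using Sf_den_pos by (intro smooth1_inverse) (auto simp: less_le)
  then show ?thesis unfolding Sf_def[abs_def] by (intro smooth1_mult smooth1_Ef)
qed

lemma Sf_0: "x \<le> 0 \<Longrightarrow> Sf x = 0" by (simp add: Sf_def Ef_zero)
lemma Sf_1: "x \<ge> 1 \<Longrightarrow> Sf x = 1"
  using Sf_den_pos[of x] by (simp add: Sf_def Ef_zero)
lemma Sf_nonneg: "Sf x \<ge> 0" using Sf_den_pos[of x] by (simp add: Sf_def Ef_nonneg)
lemma Sf_le1: "Sf x \<le> 1"
  using Sf_den_pos[of x] Ef_nonneg[of "1-x"] by (simp add: Sf_def field_simps)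

lemma deriv_locconst:
  fixes f :: "real \<Rightarrow> real"
  assumes "open A" "x \<in> A" "\<And>y. y \<in> A \<Longrightarrow> f y = c"
  shows "deriv f x = 0"
proof -
  have "((\<lambda>y. c) has_real_derivative 0) (at x)" by simp
  then have "(f has_real_derivative 0) (at x)"
    by (rule has_field_derivative_transform_within_open[OF _ assms(1,2)]) (use assms(3) in auto)
  then show ?thesis by (rule DERIV_imp_deriv)
qed

lemma Sf_d1_out: "x < 0 \<or> x > 1 \<Longrightarrow> deriv Sf x = 0"
proof -
  assume "x < 0 \<or> x > 1"
  then show ?thesis
  proof
    assume "x < 0" then show ?thesis by (intro deriv_locconst[of "{..<0}" _ _ 0]) (auto simp: Sf_0)
  next
    assume "x > 1" then show ?thesis by (intro deriv_locconst[of "{1<..}" _ _ 1]) (auto simp: Sf_1)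
  qed
qed

lemma Sf_d2_out: "x < 0 \<or> x > 1 \<Longrightarrow> deriv (deriv Sf) x = 0"
proof -
  assume "x < 0 \<or> x > 1"
  then show ?thesis
  proof
    assume "x < 0"
    show ?thesis by (rule deriv_locconst[of "{..<0}" x "deriv Sf" 0]) (use \<open>x<0\<close> in \<open>auto simp: Sf_d1_out\<close>)
  next
    assume "x > 1"
    show ?thesis by (rule deriv_locconst[of "{1<..}" x "deriv Sf" 0]) (use \<open>x>1\<close> in \<open>auto simp: Sf_d1_out\<close>)
  qed
qed

lemma smooth1_bounded_on:
  assumes "smooth1 f" shows "\<exists>M\<ge>0. \<forall>x\<in>{a..b}. \<bar>f x\<bar> \<le> M"
proof -
  have "compact (f ` {a..b})" by (intro compact_continuous_image smooth1_cont assms) auto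
  then obtain M where "\<forall>y\<in>f ` {a..b}. norm y \<le> M" using compact_imp_bounded bounded_iff by metis
  then show ?thesis by (intro exI[of _ "max M 0"]) auto
qed

lemma Sf_d_bounds: "\<exists>M1 M2. M1 \<ge> 0 \<and> M2 \<ge> 0 \<and> (\<forall>x. \<bar>deriv Sf x\<bar> \<le> M1) \<and> (\<forall>x. \<bar>deriv (deriv Sf) x\<bar> \<le> M2)"
proof -
  obtain M1 where M1: "M1 \<ge> 0" "\<forall>x\<in>{0..1}. \<bar>deriv Sf x\<bar> \<le> M1"
    using smooth1_bounded_on[OF smooth1_deriv[OF smooth1_Sf]] by blast
  obtain M2 where M2: "M2 \<ge> 0" "\<forall>x\<in>{0..1}. \<bar>deriv (deriv Sf) x\<bar> \<le> M2"
    using smooth1_bounded_on[OF smooth1_deriv[OF smooth1_deriv[OF smooth1_Sf]]] by blast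
  have "\<bar>deriv Sf x\<bar> \<le> M1" for x
    using M1 Sf_d1_out[of x] by (cases "x < 0 \<or> x > 1") auto
  moreover have "\<bar>deriv (deriv Sf) x\<bar> \<le> M2" for x
    using M2 Sf_d2_out[of x] by (cases "x < 0 \<or> x > 1") auto
  ultimately show ?thesis using M1 M2 by blast
qed

definition eta :: "real \<Rightarrow> real \<Rightarrow> real" where
  "eta n t = Sf (n * t + -1) * Sf ((-n) * t + (n - 1))"

definition cutf :: "real \<Rightarrow> (real \<Rightarrow> real) \<Rightarrow> real \<Rightarrow> real" where
  "cutf n v t = v t * eta n t"

lemma smooth1_eta: "smooth1 (eta n)"
  unfolding eta_def[abs_def] by (intro smooth1_mult smooth1_affine smooth1_Sf)

lemma smooth1_cutf: "smooth1 v \<Longrightarrow> smooth1 (cutf n v)"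
  unfolding cutf_def[abs_def] by (intro smooth1_mult smooth1_eta)

lemma eta_nonneg: "eta n t \<ge> 0" by (simp add: eta_def Sf_nonneg)
lemma eta_le1: "eta n t \<le> 1" unfolding eta_def
  by (rule mult_le_one[OF Sf_le1 Sf_nonneg Sf_le1])

lemma eta_zero: "n > 0 \<Longrightarrow> t \<le> 1/n \<or> t \<ge> 1 - 1/n \<Longrightarrow> eta n t = 0"
proof -
  assume n: "n > 0" and t: "t \<le> 1/n \<or> t \<ge> 1 - 1/n"
  from t show ?thesis
  proof
    assume "t \<le> 1/n" then have "n * t \<le> 1" using n by (simp add: field_simps)
    then show ?thesis by (simp add: eta_def Sf_0)
  next
    assume "t \<ge> 1 - 1/n" then have "n * t \<ge> n - 1" using n by (simp add: field_simps)
    then show ?thesis by (simp add: eta_def Sf_0)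
  qed
qed

lemma sm_a: "smooth1 (\<lambda>t. Sf (n * t + -1))" by (intro smooth1_affine smooth1_Sf)
lemma sm_b: "smooth1 (\<lambda>t. Sf ((-n) * t + (n - 1)))" by (intro smooth1_affine smooth1_Sf)
lemma sm_da: "smooth1 (\<lambda>t. deriv Sf (n * t + -1))" by (intro smooth1_affine smooth1_deriv smooth1_Sf)
lemma sm_db: "smooth1 (\<lambda>t. deriv Sf ((-n) * t + (n - 1)))" by (intro smooth1_affine smooth1_deriv smooth1_Sf)

lemma deriv_eta_raw: "deriv (eta n) = (\<lambda>t. n * deriv Sf (n * t + -1) * Sf ((-n) * t + (n - 1))
       + Sf (n * t + -1) * ((-n) * deriv Sf ((-n) * t + (n - 1))))"
proof -
  have "deriv (eta n) = deriv (\<lambda>t. Sf (n * t + -1) * Sf ((-n) * t + (n - 1)))"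
    by (simp only: eta_def[abs_def])
  also have "\<dots> = (\<lambda>t. deriv (\<lambda>t. Sf (n * t + -1)) t * Sf ((-n) * t + (n - 1)) + Sf (n * t + -1) * deriv (\<lambda>t. Sf ((-n) * t + (n - 1))) t)"
    by (rule deriv_mult_fun[OF sm_a sm_b])
  also have "\<dots> = (\<lambda>t. n * deriv Sf (n * t + -1) * Sf ((-n) * t + (n - 1))
       + Sf (n * t + -1) * ((-n) * deriv Sf ((-n) * t + (n - 1))))"
    unfolding deriv_affine_fun[OF smooth1_Sf] ..
  finally show ?thesis .
qed

lemma deriv_eta: "deriv (eta n) = (\<lambda>t. n * deriv Sf (n * t + -1) * Sf ((-n) * t + (n - 1))
       - n * Sf (n * t + -1) * deriv Sf ((-n) * t + (n - 1)))"
  unfolding deriv_eta_raw by (rule ext) (simp add: algebra_simps)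

lemma deriv2_eta: "deriv (deriv (eta n)) = (\<lambda>t.
      n^2 * deriv (deriv Sf) (n * t + -1) * Sf ((-n) * t + (n - 1))
      - 2 * n^2 * deriv Sf (n * t + -1) * deriv Sf ((-n) * t + (n - 1))
      + n^2 * Sf (n * t + -1) * deriv (deriv Sf) ((-n) * t + (n - 1)))"
proof -
  have s1: "smooth1 (\<lambda>t. n * deriv Sf (n * t + -1))" by (intro smooth1_mult smooth1_const sm_da)
  have s2: "smooth1 (\<lambda>t. (-n) * deriv Sf ((-n) * t + (n - 1)))" by (intro smooth1_mult smooth1_const sm_db)
  have "deriv (deriv (eta n)) = deriv (\<lambda>t. (\<lambda>t. n * deriv Sf (n * t + -1)) t * Sf ((-n) * t + (n - 1))
       + Sf (n * t + -1) * (\<lambda>t. (-n) * deriv Sf ((-n) * t + (n - 1))) t)"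
    by (simp only: deriv_eta_raw mult.assoc)
  also have "\<dots> = (\<lambda>t. deriv (\<lambda>t. n * deriv Sf (n * t + -1) * Sf ((-n) * t + (n - 1))) t
       + deriv (\<lambda>t. Sf (n * t + -1) * ((-n) * deriv Sf ((-n) * t + (n - 1)))) t)"
    by (rule deriv_add_fun) (intro smooth1_mult s1 s2 sm_a sm_b smooth1_const sm_da sm_db)+
  also have "\<dots> = (\<lambda>t. (deriv (\<lambda>t. n * deriv Sf (n * t + -1)) t * Sf ((-n) * t + (n - 1)) + (n * deriv Sf (n * t + -1)) * deriv (\<lambda>t. Sf ((-n) * t + (n - 1))) t)
       + (deriv (\<lambda>t. Sf (n * t + -1)) t * ((-n) * deriv Sf ((-n) * t + (n - 1))) + Sf (n * t + -1) * deriv (\<lambda>t. (-n) * deriv Sf ((-n) * t + (n - 1))) t))"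
    unfolding deriv_mult_fun[OF s1 sm_b] deriv_mult_fun[OF sm_a s2] ..
  also have "\<dots> = (\<lambda>t. (n * (n * deriv (deriv Sf) (n * t + -1)) * Sf ((-n) * t + (n - 1)) + (n * deriv Sf (n * t + -1)) * ((-n) * deriv Sf ((-n) * t + (n - 1))))
       + ((n * deriv Sf (n * t + -1)) * ((-n) * deriv Sf ((-n) * t + (n - 1))) + Sf (n * t + -1) * ((-n) * ((-n) * deriv (deriv Sf) ((-n) * t + (n - 1))))))"
    unfolding deriv_mult_fun[OF smooth1_const sm_da] deriv_mult_fun[OF smooth1_const sm_db]
      deriv_affine_fun[OF smooth1_Sf] deriv_affine_fun[OF smooth1_deriv[OF smooth1_Sf]] deriv_const
    by simp
  finally show ?thesis by (simp add: algebra_simps power2_eq_square)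
qed

lemma eta_inner:
  assumes "n * t + -1 > 1" "(-n) * t + (n - 1) > 1"
  shows "eta n t = 1" "deriv (eta n) t = 0" "deriv (deriv (eta n)) t = 0"
proof -
  show "eta n t = 1" using assms by (simp add: eta_def Sf_1)
  show "deriv (eta n) t = 0" using assms by (simp only: deriv_eta) (simp add: Sf_d1_out)
  show "deriv (deriv (eta n)) t = 0" using assms by (simp only: deriv2_eta) (simp add: Sf_d1_out Sf_d2_out)
qed

lemma eventually_inner:
  assumes "0 < t" "t < 1"
  shows "eventually (\<lambda>m. real m * t + -1 > 1 \<and> (- real m) * t + (real m - 1) > 1) sequentially"
proof -
  obtain N :: nat where N: "real N > 2 / t + 2 / (1 - t)" using reals_Archimedean2 by blast
  have "real m * t + -1 > 1 \<and> (- real m) * t + (real m - 1) > 1" if "m \<ge> N" for m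
  proof -
    have m: "real m > 2 / t + 2 / (1 - t)" using N that by (meson le_less_trans of_nat_le_iff not_le order_less_le_trans)
    have "2 / t > 0" "2 / (1 - t) > 0" using assms by auto
    then have "real m > 2 / t" "real m > 2 / (1 - t)" using m by linarith+
    then have "real m * t > 2" "real m * (1 - t) > 2" using assms by (auto simp: field_simps)
    then show ?thesis by (auto simp: algebra_simps)
  qed
  then show ?thesis unfolding eventually_sequentially by blast
qed

lemma cutf_eventually:
  assumes "0 < t" "t < 1" "smooth1 v"
  shows "eventually (\<lambda>m. cutf (real m) v t = v t \<and>
           deriv (deriv (cutf (real m) v)) t = deriv (deriv v) t) sequentially"
proof -
  have *: "cutf n v t = v t \<and> deriv (deriv (cutf n v)) t = deriv (deriv v) t"
    if "n * t + -1 > 1 \<and> (-n) * t + (n - 1) > 1" for n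
  proof -
    have "deriv (deriv (cutf n v)) = (\<lambda>x. deriv (deriv v) x * eta n x + 2 * (deriv v x * deriv (eta n) x) + v x * deriv (deriv (eta n)) x)"
      unfolding cutf_def[abs_def] by (rule deriv2_mult_fun[OF assms(3) smooth1_eta])
    then show ?thesis using eta_inner[of n t] that by (simp add: cutf_def)
  qed
  show ?thesis using eventually_inner[OF assms(1,2)] by (rule eventually_mono) (rule *)
qed

lemma taylor0:
  assumes v: "smooth1 v" and v0: "v 0 = 0" "deriv v 0 = 0"
    and V: "\<forall>s\<in>{0..1}. \<bar>deriv (deriv v) s\<bar> \<le> V" and t: "t \<in> {0..1}"
  shows "\<bar>deriv v t\<bar> \<le> V * t" "\<bar>v t\<bar> \<le> V * t^2"
proof -
  have d1: "\<bar>deriv v s\<bar> \<le> V * s" if s: "s \<in> {0..1}" for s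
  proof (cases "s = 0")
    case True then show ?thesis using v0 by simp
  next
    case False
    then have "0 < s" using s by simp
    from MVT2[OF this, of "deriv v" "deriv (deriv v)"] obtain z where
      z: "0 < z" "z < s" "deriv v s - deriv v 0 = (s - 0) * deriv (deriv v) z"
      using smooth1_DERIV[OF smooth1_deriv[OF v]] by blast
    have "\<bar>deriv (deriv v) z\<bar> \<le> V" using V z s by auto
    then have "\<bar>s * deriv (deriv v) z\<bar> \<le> s * V" using \<open>0<s\<close> by (simp add: abs_mult mult_left_mono)
    then show ?thesis using z v0 by (simp add: mult.commute)
  qed
  show "\<bar>deriv v t\<bar> \<le> V * t" using d1[OF t] .
  show "\<bar>v t\<bar> \<le> V * t^2"
  proof (cases "t = 0")
    case True then show ?thesis using v0 by simp
  next
    case False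
    then have "0 < t" using t by simp
    from MVT2[OF this, of v "deriv v"] obtain z where
      z: "0 < z" "z < t" "v t - v 0 = (t - 0) * deriv v z"
      using smooth1_DERIV[OF v] by blast
    have "\<bar>deriv v z\<bar> \<le> V * z" using d1 z t by auto
    also have "\<dots> \<le> V * t" using z d1[of 0] V t by (intro mult_left_mono) (auto, smt (verit) atLeastAtMost_iff)
    finally have "\<bar>t * deriv v z\<bar> \<le> t * (V * t)" using \<open>0<t\<close> by (simp add: abs_mult mult_left_mono)
    then show ?thesis using z v0 by (simp add: power2_eq_square mult.commute mult.left_commute)
  qed
qed

lemma abs3: "\<bar>x\<bar> \<le> X \<Longrightarrow> \<bar>y\<bar> \<le> Y \<Longrightarrow> \<bar>z\<bar> \<le> (Z::real) \<Longrightarrow> \<bar>x * y * z\<bar> \<le> X * Y * Z"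
  by (simp add: abs_mult mult_mono' order_trans[OF abs_ge_zero])

lemma abs2: "\<bar>x\<bar> \<le> X \<Longrightarrow> \<bar>y\<bar> \<le> (Y::real) \<Longrightarrow> \<bar>x * y\<bar> \<le> X * Y"
  by (simp add: abs_mult mult_mono' order_trans[OF abs_ge_zero])

lemma cut_d2_bound:
  assumes v: "smooth1 v" and b0: "v 0 = 0" "deriv v 0 = 0" and b1: "v 1 = 0" "deriv v 1 = 0"
    and V: "\<forall>s\<in>{0..1}. \<bar>deriv (deriv v) s\<bar> \<le> V"
    and M1: "\<forall>x. \<bar>deriv Sf x\<bar> \<le> M1" and M2: "\<forall>x. \<bar>deriv (deriv Sf) x\<bar> \<le> M2"
    and n: "n > 0" and t: "t \<in> {0..1}"
  shows "\<bar>deriv (deriv (cutf n v)) t\<bar> \<le> V * (1 + 8 * M1 + 8 * M2 + 8 * M1^2)"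
proof -
  define a where "a = n * t + -1"
  define b where "b = (-n) * t + (n - 1)"
  have V0: "V \<ge> 0" using V by (meson abs_ge_zero atLeastAtMost_iff order_trans zero_le_one order_refl)
  have M10: "M1 \<ge> 0" using M1 by (meson abs_ge_zero order_trans)
  have M20: "M2 \<ge> 0" using M2 by (meson abs_ge_zero order_trans)
  have L1: "\<bar>deriv v t\<bar> \<le> V * t" "\<bar>v t\<bar> \<le> V * t^2" using taylor0[OF v b0 V t] by auto
  define w where "w = (\<lambda>s. v ((-1) * s + 1))"
  have w: "smooth1 w" unfolding w_def by (intro smooth1_affine v)
  have dw: "deriv w = (\<lambda>s. (-1) * deriv v ((-1) * s + 1))" unfolding w_def by (rule deriv_affine_fun[OF v])
  have ddw: "deriv (deriv w) = (\<lambda>s. (-1) * ((-1) * deriv (deriv v) ((-1) * s + 1)))"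
    unfolding dw using deriv_mult_fun[OF smooth1_const smooth1_affine[OF smooth1_deriv[OF v]], of "-1" "-1" 1]
      deriv_affine_fun[OF smooth1_deriv[OF v], of "-1" 1] deriv_const
    by (simp add: fun_eq_iff)
  have w0: "w 0 = 0" "deriv w 0 = 0" using b1 by (simp add: w_def, simp only: dw, simp)
  have Vw: "\<forall>s\<in>{0..1}. \<bar>deriv (deriv w) s\<bar> \<le> V" using V by (auto simp: ddw)
  have t1: "1 - t \<in> {0..1}" using t by auto
  have L2: "\<bar>deriv v t\<bar> \<le> V * (1 - t)" "\<bar>v t\<bar> \<le> V * (1 - t)^2"
    using taylor0[OF w w0 Vw t1] unfolding dw by (simp_all add: w_def)
  have S1: "\<bar>Sf x\<bar> \<le> 1" for x using Sf_nonneg[of x] Sf_le1[of x] by simp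
  have T1: "\<bar>deriv (deriv v) t * eta n t\<bar> \<le> V * 1"
    using V t eta_nonneg[of n t] eta_le1[of n t] by (intro abs2) auto
  have T2: "\<bar>deriv v t * (n * deriv Sf a) * Sf b\<bar> \<le> 2 * V * M1"
  proof (cases "a > 1")
    case True then show ?thesis using Sf_d1_out[of a] V0 M10 by simp
  next
    case False then have nt: "n * t \<le> 2" by (simp add: a_def)
    have "\<bar>deriv v t * (n * deriv Sf a) * Sf b\<bar> \<le> (V * t) * (n * M1) * 1"
      using L1 M1 S1 n by (intro abs3) (auto simp: abs_mult intro: mult_left_mono)
    also have "\<dots> = (n * t) * (V * M1)" by simp
    also have "\<dots> \<le> 2 * (V * M1)" using nt V0 M10 by (intro mult_right_mono) auto
    finally show ?thesis by simp
  qed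
  have T3: "\<bar>deriv v t * (n * deriv Sf b) * Sf a\<bar> \<le> 2 * V * M1"
  proof (cases "b > 1")
    case True then show ?thesis using Sf_d1_out[of b] V0 M10 by simp
  next
    case False then have nt: "n * (1 - t) \<le> 2" by (simp add: b_def algebra_simps)
    have "\<bar>deriv v t * (n * deriv Sf b) * Sf a\<bar> \<le> (V * (1 - t)) * (n * M1) * 1"
      using L2 M1 S1 n by (intro abs3) (auto simp: abs_mult intro: mult_left_mono)
    also have "\<dots> = (n * (1 - t)) * (V * M1)" by simp
    also have "\<dots> \<le> 2 * (V * M1)" using nt V0 M10 by (intro mult_right_mono) auto
    finally show ?thesis by simp
  qed
  have T4: "\<bar>v t * (n^2 * deriv (deriv Sf) a) * Sf b\<bar> \<le> 4 * V * M2"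
  proof (cases "a > 1")
    case True then show ?thesis using Sf_d2_out[of a] V0 M20 by simp
  next
    case False then have nt: "n * t \<le> 2" by (simp add: a_def)
    then have nt2: "(n * t)^2 \<le> 4" using n t by (metis atLeastAtMost_iff mult_nonneg_nonneg less_imp_le power_mono power2_eq_square numeral_times_numeral mult_2 mult_2_right[symmetric] semiring_norm(2)  num_double) 
    have "\<bar>v t * (n^2 * deriv (deriv Sf) a) * Sf b\<bar> \<le> (V * t^2) * (n^2 * M2) * 1"
      using L1 M2 S1 n by (intro abs3) (auto simp: abs_mult intro: mult_left_mono)
    also have "\<dots> = (n * t)^2 * (V * M2)" by (simp add: power_mult_distrib)
    also have "\<dots> \<le> 4 * (V * M2)" using nt2 V0 M20 by (intro mult_right_mono) auto
    finally show ?thesis by simp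
  qed
  have T6: "\<bar>v t * (n^2 * deriv (deriv Sf) b) * Sf a\<bar> \<le> 4 * V * M2"
  proof (cases "b > 1")
    case True then show ?thesis using Sf_d2_out[of b] V0 M20 by simp
  next
    case False then have nt: "n * (1 - t) \<le> 2" by (simp add: b_def algebra_simps)
    then have nt2: "(n * (1 - t))^2 \<le> 4" using n t
      by (metis atLeastAtMost_iff diff_ge_0_iff_ge mult_nonneg_nonneg less_imp_le power_mono power2_eq_square numeral_times_numeral semiring_norm(2) num_double)
    have "\<bar>v t * (n^2 * deriv (deriv Sf) b) * Sf a\<bar> \<le> (V * (1 - t)^2) * (n^2 * M2) * 1"
      using L2 M2 S1 n by (intro abs3) (auto simp: abs_mult intro: mult_left_mono)
    also have "\<dots> = (n * (1 - t))^2 * (V * M2)" by (simp add: power_mult_distrib)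
    also have "\<dots> \<le> 4 * (V * M2)" using nt2 V0 M20 by (intro mult_right_mono) auto
    finally show ?thesis by simp
  qed
  have T5: "\<bar>v t * (n * deriv Sf a) * (n * deriv Sf b)\<bar> \<le> 4 * V * M1^2"
  proof (cases "a > 1")
    case True then show ?thesis using Sf_d1_out[of a] V0 M10 by simp
  next
    case False then have nt: "n * t \<le> 2" by (simp add: a_def)
    then have nt2: "(n * t)^2 \<le> 4" using n t
      by (metis atLeastAtMost_iff mult_nonneg_nonneg less_imp_le power_mono power2_eq_square numeral_times_numeral semiring_norm(2) num_double)
    have "\<bar>v t * (n * deriv Sf a) * (n * deriv Sf b)\<bar> \<le> (V * t^2) * (n * M1) * (n * M1)"
      using L1 M1 n by (intro abs3) (auto simp: abs_mult intro: mult_left_mono)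
    also have "\<dots> = (n * t)^2 * (V * M1^2)" by (simp add: power_mult_distrib power2_eq_square)
    also have "\<dots> \<le> 4 * (V * M1^2)" using nt2 V0 M10 by (intro mult_right_mono) auto
    finally show ?thesis by simp
  qed
  have eq: "deriv (deriv (cutf n v)) t =
      deriv (deriv v) t * eta n t + 2 * (deriv v t * (n * deriv Sf a) * Sf b)
      - 2 * (deriv v t * (n * deriv Sf b) * Sf a)
      + v t * (n^2 * deriv (deriv Sf) a) * Sf b
      - 2 * (v t * (n * deriv Sf a) * (n * deriv Sf b))
      + v t * (n^2 * deriv (deriv Sf) b) * Sf a"
  proof -
    have "deriv (deriv (cutf n v)) = (\<lambda>x. deriv (deriv v) x * eta n x + 2 * (deriv v x * deriv (eta n) x) + v x * deriv (deriv (eta n)) x)"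
      unfolding cutf_def[abs_def] by (rule deriv2_mult_fun[OF v smooth1_eta])
    note h = this[unfolded deriv2_eta]
    note h2 = h[unfolded deriv_eta]
    show ?thesis unfolding h2 a_def b_def
      by (simp add: algebra_simps power2_eq_square)
  qed
  show ?thesis unfolding eq using T1 T2 T3 T4 T5 T6 unfolding abs_le_iff
    by (simp add: algebra_simps)
qed

definition prodf :: "('n::finite \<Rightarrow> real \<Rightarrow> real) \<Rightarrow> real^'n \<Rightarrow> real" where
  "prodf u x = (\<Prod>i\<in>UNIV. u i (x$i))"

lemma axis_shift: "(x + t *\<^sub>R axis j 1) $ i = x $ i + (if i = j then t else 0)"
  by (simp add: axis_def)

lemma prodf_line:
  "prodf w (x + t *\<^sub>R axis j 1) = w j (x$j + t) * (\<Prod>i\<in>UNIV - {j}. w i (x$i))"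
proof -
  have "prodf w (x + t *\<^sub>R axis j 1) = (\<Prod>i\<in>UNIV. w i (x $ i + (if i = j then t else 0)))"
    unfolding prodf_def by (intro prod.cong) (auto simp: axis_def)
  also have "\<dots> = w j (x$j + t) * (\<Prod>i\<in>UNIV - {j}. w i (x $ i + (if i = j then t else 0)))"
    by (subst prod.remove[of UNIV j]) auto
  also have "(\<Prod>i\<in>UNIV - {j}. w i (x $ i + (if i = j then t else 0))) = (\<Prod>i\<in>UNIV - {j}. w i (x$i))"
    by (rule prod.cong) auto
  finally show ?thesis .
qed

lemma prodf_line_DERIV:
  assumes "smooth1 (w j)"
  shows "((\<lambda>t. prodf w (x + t *\<^sub>R axis j 1)) has_real_derivative
          prodf (\<lambda>i. if i = j then deriv (w i) else w i) x) (at 0)"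
proof -
  have "((\<lambda>t. w j (x$j + t)) has_real_derivative deriv (w j) (x$j + 0) * 1) (at 0)"
    by (rule DERIV_chain2[OF smooth1_DERIV[OF assms]]) (auto intro!: derivative_eq_intros)
  then have "((\<lambda>t. w j (x$j + t) * (\<Prod>i\<in>UNIV - {j}. w i (x$i))) has_real_derivative
      deriv (w j) (x$j) * (\<Prod>i\<in>UNIV - {j}. w i (x$i))) (at 0)"
    by (auto intro: DERIV_cmult_right)
  moreover have "prodf (\<lambda>i. if i = j then deriv (w i) else w i) x = deriv (w j) (x$j) * (\<Prod>i\<in>UNIV - {j}. w i (x$i))"
  proof -
    have "prodf (\<lambda>i. if i = j then deriv (w i) else w i) x = deriv (w j) (x$j) * (\<Prod>i\<in>UNIV - {j}. (if i = j then deriv (w i) else w i) (x$i))"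
      unfolding prodf_def by (subst prod.remove[of UNIV j]) auto
    also have "(\<Prod>i\<in>UNIV - {j}. (if i = j then deriv (w i) else w i) (x$i)) = (\<Prod>i\<in>UNIV - {j}. w i (x$i))"
      by (rule prod.cong) auto
    finally show ?thesis .
  qed
  ultimately show ?thesis unfolding prodf_line by simp
qed

lemma partial_prodf:
  assumes "smooth1 (w j)"
  shows "partial j (prodf w) = prodf (\<lambda>i. if i = j then deriv (w i) else w i)"
  using DERIV_imp_deriv[OF prodf_line_DERIV[of w j, OF assms]] by (auto simp: partial_def fun_eq_iff)

lemma iter_partial_prodf:
  assumes "\<forall>i. smooth1 (u i)"
  shows "iter_partial is (prodf u) = prodf (\<lambda>i. (deriv ^^ count_list is i) (u i))"
proof (induction "is")
  case Nil then show ?case by simp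
next
  case (Cons j "is")
  have sm: "smooth1 ((deriv ^^ count_list is j) (u j))" using assms smooth1_funpow by blast
  have "iter_partial (j # is) (prodf u) = partial j (prodf (\<lambda>i. (deriv ^^ count_list is i) (u i)))"
    using Cons by simp
  also have "\<dots> = prodf (\<lambda>i. if i = j then deriv ((deriv ^^ count_list is i) (u i)) else (deriv ^^ count_list is i) (u i))"
    by (rule partial_prodf) (use sm in simp)
  also have "\<dots> = prodf (\<lambda>i. (deriv ^^ count_list (j # is) i) (u i))"
    by (rule arg_cong[where f=prodf]) (auto simp: fun_eq_iff)
  finally show ?case .
qed

lemma prodf_cont:
  assumes "\<forall>i. smooth1 (w i)" shows "continuous_on UNIV (prodf w)"
  unfolding prodf_def[abs_def]
  by (intro continuous_on_prod continuous_on_compose2[OF smooth1_cont[OF assms[rule_format]]] continuous_on_component continuous_on_id) auto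

lemma smooth_fun_prodf:
  assumes "\<forall>i. smooth1 (u i)" shows "smooth_fun (prodf u)"
  unfolding smooth_fun_def
proof (intro allI conjI)
  fix "is"
  have sm: "\<forall>i. smooth1 ((deriv ^^ count_list is i) (u i))" using assms smooth1_funpow by blast
  show "continuous_on UNIV (iter_partial is (prodf u))"
    unfolding iter_partial_prodf[OF assms] by (rule prodf_cont[OF sm])
  fix i x
  show "(\<lambda>t. iter_partial is (prodf u) (x + t *\<^sub>R axis i 1)) differentiable at 0"
    unfolding iter_partial_prodf[OF assms]
    using prodf_line_DERIV[of "\<lambda>i. (deriv ^^ count_list is i) (u i)" i x] sm real_differentiable_def by blast
qed

lemma test_fun_prodf:
  assumes "\<forall>i. smooth1 (u i)" and d: "0 < d" "d < 1/2"
    and z: "\<And>i t. t \<le> d \<or> t \<ge> 1 - d \<Longrightarrow> u i t = 0"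
  shows "test_fun (prodf u)"
  unfolding test_fun_def
proof (intro conjI smooth_fun_prodf[OF assms(1)] exI[of _ "cbox (\<chi> i. d) (\<chi> i. 1 - d)"])
  show "compact (cbox (\<chi> i. d) (\<chi> i. 1 - d) :: (real^'a) set)" by simp
  show "cbox (\<chi> i. d) (\<chi> i. 1 - d) \<subseteq> (open_unit_cube :: (real^'a) set)"
  proof
    fix x :: "real^'a" assume x: "x \<in> cbox (\<chi> i. d) (\<chi> i. 1 - d)"
    have "0 < x$i \<and> x$i < 1" for i
    proof -
      from x have "d \<le> x$i \<and> x$i \<le> 1 - d" by (simp add: mem_box_cart)
      with d show ?thesis by linarith
    qed
    then show "x \<in> open_unit_cube" by (simp add: open_unit_cube_def mem_box_cart)
  qed
  show "\<forall>x. x \<notin> cbox (\<chi> i. d) (\<chi> i. 1 - d) \<longrightarrow> prodf u x = 0"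
  proof (intro allI impI)
    fix x :: "real^'a" assume "x \<notin> cbox (\<chi> i. d) (\<chi> i. 1 - d)"
    then obtain i where "x$i < d \<or> x$i > 1 - d" by (auto simp: mem_box_cart not_le)
    then have "u i (x$i) = 0" using z by force
    then show "prodf u x = 0" unfolding prodf_def by (intro prod_zero) auto
  qed
qed

lemma count_distinct: "distinct l \<Longrightarrow> count_list l i = (if i \<in> set l then 1 else 0)"
  by (induction l) auto

lemma count_double: "count_list (concat (map (\<lambda>i. [i, i]) l)) j = 2 * count_list l j"
  by (induction l) auto

lemma mixed_D2_prodf:
  assumes "\<forall>i. smooth1 (u i)"
  shows "mixed_D2 e (prodf u) = prodf (\<lambda>i. if i \<in> e then deriv (deriv (u i)) else u i)"
proof -
  define l where "l = (SOME l. set l = e \<and> distinct l)"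
  have "\<exists>l. set l = e \<and> distinct l" by (rule finite_distinct_list) simp
  then have l: "set l = e" "distinct l" unfolding l_def by (metis (mono_tags, lifting) someI_ex)+
  have "mixed_D2 e (prodf u) = prodf (\<lambda>i. (deriv ^^ count_list (concat (map (\<lambda>i. [i, i]) l)) i) (u i))"
    unfolding mixed_D2_def l_def[symmetric] by (rule iter_partial_prodf[OF assms])
  also have "\<dots> = prodf (\<lambda>i. if i \<in> e then deriv (deriv (u i)) else u i)"
    by (rule arg_cong[where f=prodf]) (auto simp: fun_eq_iff count_double count_distinct[OF l(2)] l(1) numeral_2_eq_2)
  finally show ?thesis .
qed

lemma cube_lmeas: "(unit_cube :: (real^'n::finite) set) \<in> lmeasurable"
  by (simp add: unit_cube_def)

lemma cube_sets: "(unit_cube :: (real^'n::finite) set) \<in> sets lebesgue"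
  using cube_lmeas fmeasurable_def by blast

lemma fin_cube: "finite_measure (lebesgue_on (unit_cube :: (real^'n::finite) set))"
  by (rule finite_measure_lebesgue_on[OF cube_lmeas])

lemma integrable_const_cube: "integrable (lebesgue_on (unit_cube :: (real^'n::finite) set)) (\<lambda>x. c::real)"
  using finite_measure.integrable_const[OF fin_cube] by blast

lemma space_cube: "space (lebesgue_on (unit_cube :: (real^'n::finite) set)) = unit_cube"
  by simp

lemma L2_integrable:
  fixes f :: "real^'n::finite \<Rightarrow> real"
  assumes "L2_cube f" shows "integrable (lebesgue_on unit_cube) f"
proof -
  have m: "f \<in> borel_measurable (lebesgue_on unit_cube)" and i: "integrable (lebesgue_on unit_cube) (\<lambda>x. (f x)\<^sup>2)"
    using assms by (auto simp: L2_cube_def)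
  have "integrable (lebesgue_on unit_cube) (\<lambda>x. 1 + (f x)\<^sup>2)"
    by (intro Bochner_Integration.integrable_add integrable_const_cube i)
  moreover have "norm (f x) \<le> norm (1 + (f x)\<^sup>2)" for x
  proof (cases "\<bar>f x\<bar> \<le> 1")
    case True then show ?thesis by (simp add: add_increasing2)
  next
    case False then have "\<bar>f x\<bar> * 1 \<le> \<bar>f x\<bar> * \<bar>f x\<bar>" by (intro mult_left_mono) auto
    then show ?thesis by (simp add: power2_eq_square abs_mult_self_eq)
  qed
  ultimately show ?thesis
    by (intro Bochner_Integration.integrable_bound[OF _ m] AE_I2) auto
qed

lemma prodf_meas: "\<forall>i. smooth1 (w i) \<Longrightarrow> prodf w \<in> borel_measurable (lebesgue_on (unit_cube :: (real^'n::finite) set))"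
  by (rule continuous_imp_measurable_on_sets_lebesgue[OF continuous_on_subset[OF prodf_cont] cube_sets]) auto

lemma AE_box: "AE x in lebesgue_on (unit_cube :: (real^'n::finite) set). x \<in> box 0 1"
proof -
  have "(cbox 0 1 - box 0 1 :: (real^'n) set) \<in> null_sets lebesgue"
    using negligible_frontier_interval negligible_iff_null_sets by blast
  then have "AE x in lebesgue. x \<notin> (cbox 0 1 - box 0 1 :: (real^'n) set)" by (rule AE_not_in)
  then have "AE x in lebesgue. x \<in> (unit_cube :: (real^'n) set) \<longrightarrow> x \<in> box 0 1"
    by eventually_elim (auto simp: unit_cube_def)
  then show ?thesis by (subst AE_restrict_space_iff) (auto simp: cube_sets)
qed

lemma prod_abs_bound:
  fixes a :: "'n::finite \<Rightarrow> real"
  assumes "\<And>i. \<bar>a i\<bar> \<le> K i"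
  shows "\<bar>\<Prod>i\<in>UNIV. a i\<bar> \<le> (\<Prod>i\<in>UNIV. K i)"
  unfolding abs_prod by (rule prod_mono) (use assms in auto)

lemma cutf_le: "\<bar>cutf n v t\<bar> \<le> \<bar>v t\<bar>"
  unfolding cutf_def abs_mult using eta_nonneg[of n t] eta_le1[of n t]
  by (simp add: mult_left_le)

lemma ext_weak:
  fixes f g :: "real^'n::finite \<Rightarrow> real"
  assumes W: "is_weak_mixed_D2 e f g" and Lf: "L2_cube f" and v: "\<forall>i. smooth1 (v i)"
    and bc: "\<forall>i\<in>e. v i 0 = 0 \<and> deriv (v i) 0 = 0 \<and> v i 1 = 0 \<and> deriv (v i) 1 = 0"
  shows "integral\<^sup>L (lebesgue_on unit_cube) (\<lambda>x. f x * prodf (\<lambda>i. if i \<in> e then deriv (deriv (v i)) else v i) x)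
       = integral\<^sup>L (lebesgue_on unit_cube) (\<lambda>x. g x * prodf v x)"
proof -
  define nn where "nn = (\<lambda>m::nat. real m + 3)"
  define u where "u = (\<lambda>m i. cutf (nn m) (v i))"
  define Du where "Du = (\<lambda>m i. if i \<in> e then deriv (deriv (u m i)) else u m i)"
  define Dv where "Dv = (\<lambda>i. if i \<in> e then deriv (deriv (v i)) else v i)"
  have nnpos: "nn m > 0" for m by (simp add: nn_def)
  have su: "\<forall>i. smooth1 (u m i)" for m using v by (simp add: u_def smooth1_cutf)
  have sDu: "\<forall>i. smooth1 (Du m i)" for m using su by (simp add: Du_def smooth1_deriv)
  have sDv: "\<forall>i. smooth1 (Dv i)" using v by (simp add: Dv_def smooth1_deriv)
  have test: "test_fun (prodf (u m))" for m
  proof (rule test_fun_prodf[OF su])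
    show "0 < 1 / nn m" "1 / nn m < 1/2" by (auto simp: nn_def field_simps)
    show "u m i t = 0" if "t \<le> 1 / nn m \<or> 1 - 1 / nn m \<le> t" for i t
      using eta_zero[OF nnpos that] by (simp add: u_def cutf_def)
  qed
  have mix: "mixed_D2 e (prodf (u m)) = prodf (Du m)" for m
    unfolding Du_def by (rule mixed_D2_prodf[OF su])
  have eqm: "integral\<^sup>L (lebesgue_on unit_cube) (\<lambda>x. f x * prodf (Du m) x)
           = integral\<^sup>L (lebesgue_on unit_cube) (\<lambda>x. g x * prodf (u m) x)" for m
  proof -
    have all: "\<forall>\<phi>. test_fun \<phi> \<longrightarrow>
        integrable (lebesgue_on unit_cube) (\<lambda>x. f x * mixed_D2 e \<phi> x) \<and>
        integrable (lebesgue_on unit_cube) (\<lambda>x. g x * \<phi> x) \<and>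
        integral\<^sup>L (lebesgue_on unit_cube) (\<lambda>x. f x * mixed_D2 e \<phi> x)
          = integral\<^sup>L (lebesgue_on unit_cube) (\<lambda>x. g x * \<phi> x)"
      using W unfolding is_weak_mixed_D2_def by (rule conjunct2)
    note this[rule_format, OF test[of m]]
    then show ?thesis unfolding mix by (rule conjunct2[THEN conjunct2])
  qed
  obtain M1 M2 where M: "M1 \<ge> 0" "M2 \<ge> 0" "\<forall>x. \<bar>deriv Sf x\<bar> \<le> M1" "\<forall>x. \<bar>deriv (deriv Sf) x\<bar> \<le> M2"
    using Sf_d_bounds by blast
  have "\<forall>i. \<exists>B. \<forall>t\<in>{0..1}. \<bar>v i t\<bar> \<le> B" using smooth1_bounded_on v by blast
  then obtain B where B: "\<And>i t. t \<in> {0..1} \<Longrightarrow> \<bar>v i t\<bar> \<le> B i" by metis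
  have "\<forall>i. \<exists>V. \<forall>t\<in>{0..1}. \<bar>deriv (deriv (v i)) t\<bar> \<le> V"
    using smooth1_bounded_on smooth1_deriv v by blast
  then obtain V where V: "\<And>i. \<forall>t\<in>{0..1}. \<bar>deriv (deriv (v i)) t\<bar> \<le> V i" by metis
  define K where "K = (\<lambda>i. if i \<in> e then V i * (1 + 8 * M1 + 8 * M2 + 8 * M1^2) else B i)"
  have bDu: "\<bar>Du m i t\<bar> \<le> K i" if "t \<in> {0..1}" for m i t
  proof (cases "i \<in> e")
    case True
    then show ?thesis unfolding Du_def K_def u_def
      using cut_d2_bound[OF v[rule_format] _ _ _ _ V M(3,4) nnpos that] bc by auto
  next
    case False
    then show ?thesis unfolding Du_def K_def u_def using order_trans[OF cutf_le[of "nn m" "v i" t] B[OF that, of i]] by auto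
  qed
  have bu: "\<bar>u m i t\<bar> \<le> B i" if "t \<in> {0..1}" for m i t
    unfolding u_def using order_trans[OF cutf_le[of "nn m" "v i" t] B[OF that, of i]] by auto
  have cube_comp: "x$i \<in> {0..1}" if "x \<in> unit_cube" for x :: "real^'n" and i
    using that by (auto simp: unit_cube_def mem_box_cart)
  have ev1: "eventually (\<lambda>m. u m i t = v i t \<and> Du m i t = Dv i t) sequentially" if "0 < t" "t < 1" for i t
  proof -
    define Q where "Q = (\<lambda>m::nat. cutf (real m) (v i) t = v i t \<and>
           deriv (deriv (cutf (real m) (v i))) t = deriv (deriv (v i)) t)"
    have "eventually Q sequentially"
      using cutf_eventually[OF that v[rule_format]] unfolding Q_def .
    then have "eventually (\<lambda>m. Q (m + 3)) sequentially"
      by (rule eventually_sequentially_seg[THEN iffD2])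
    then have "eventually (\<lambda>m. cutf (real (m + 3)) (v i) t = v i t \<and>
           deriv (deriv (cutf (real (m + 3)) (v i))) t = deriv (deriv (v i)) t) sequentially"
      unfolding Q_def .
    then show ?thesis by eventually_elim (auto simp: u_def Du_def Dv_def nn_def)
  qed
  have conv: "(\<lambda>m. prodf (u m) x) \<longlonglongrightarrow> prodf v x \<and> (\<lambda>m. prodf (Du m) x) \<longlonglongrightarrow> prodf Dv x"
    if "x \<in> box 0 1" for x :: "real^'n"
  proof -
    have "\<forall>i. 0 < x$i \<and> x$i < 1" using that by (simp add: mem_box_cart)
    then have "\<forall>i. eventually (\<lambda>m. u m i (x$i) = v i (x$i) \<and> Du m i (x$i) = Dv i (x$i)) sequentially"
      using ev1 by blast
    then have "eventually (\<lambda>m. \<forall>i. u m i (x$i) = v i (x$i) \<and> Du m i (x$i) = Dv i (x$i)) sequentially"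
      by (simp add: eventually_all_finite)
    then have "eventually (\<lambda>m. prodf (u m) x = prodf v x \<and> prodf (Du m) x = prodf Dv x) sequentially"
      by eventually_elim (simp add: prodf_def)
    then show ?thesis
      by (auto intro: tendsto_eventually[THEN Lim_transform_eventually] elim: eventually_mono
          simp: tendsto_eventually)
  qed
  have fm: "f \<in> borel_measurable (lebesgue_on unit_cube)" using Lf by (simp add: L2_cube_def)
  have Lg: "L2_cube g" using W by (simp add: is_weak_mixed_D2_def)
  have gm: "g \<in> borel_measurable (lebesgue_on unit_cube)" using Lg by (simp add: L2_cube_def)
  have fi: "integrable (lebesgue_on unit_cube) f" by (rule L2_integrable[OF Lf])
  have gi: "integrable (lebesgue_on unit_cube) g" by (rule L2_integrable[OF Lg])
  have lim1: "(\<lambda>m. integral\<^sup>L (lebesgue_on unit_cube) (\<lambda>x. f x * prodf (Du m) x))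
      \<longlonglongrightarrow> integral\<^sup>L (lebesgue_on unit_cube) (\<lambda>x. f x * prodf Dv x)"
  proof (rule integral_dominated_convergence[where w="\<lambda>x. \<bar>f x\<bar> * (\<Prod>i\<in>UNIV. K i)"])
    show "(\<lambda>x. f x * prodf Dv x) \<in> borel_measurable (lebesgue_on unit_cube)"
      using fm prodf_meas[OF sDv] by measurable
    show "(\<lambda>x. f x * prodf (Du m) x) \<in> borel_measurable (lebesgue_on unit_cube)" for m
      using fm prodf_meas[OF sDu] by measurable
    show "integrable (lebesgue_on unit_cube) (\<lambda>x. \<bar>f x\<bar> * (\<Prod>i\<in>UNIV. K i))"
      using fi by (intro integrable_mult_left integrable_abs)
    show "AE x in lebesgue_on unit_cube. (\<lambda>m. f x * prodf (Du m) x) \<longlonglongrightarrow> f x * prodf Dv x"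
      using AE_box by eventually_elim (use conv in \<open>auto intro: tendsto_mult tendsto_const\<close>)
    show "AE x in lebesgue_on unit_cube. norm (f x * prodf (Du m) x) \<le> \<bar>f x\<bar> * (\<Prod>i\<in>UNIV. K i)" for m
    proof (rule AE_I2)
      fix x :: "real^'n" assume "x \<in> space (lebesgue_on unit_cube)"
      then have x: "x \<in> unit_cube" by simp
      have "\<bar>prodf (Du m) x\<bar> \<le> (\<Prod>i\<in>UNIV. K i)"
        unfolding prodf_def by (rule prod_abs_bound) (use bDu cube_comp[OF x] in blast)
      then show "norm (f x * prodf (Du m) x) \<le> \<bar>f x\<bar> * (\<Prod>i\<in>UNIV. K i)"
        by (simp add: abs_mult mult_left_mono)
    qed
  qed
  have lim2: "(\<lambda>m. integral\<^sup>L (lebesgue_on unit_cube) (\<lambda>x. g x * prodf (u m) x))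
      \<longlonglongrightarrow> integral\<^sup>L (lebesgue_on unit_cube) (\<lambda>x. g x * prodf v x)"
  proof (rule integral_dominated_convergence[where w="\<lambda>x. \<bar>g x\<bar> * (\<Prod>i\<in>UNIV. B i)"])
    show "(\<lambda>x. g x * prodf v x) \<in> borel_measurable (lebesgue_on unit_cube)"
      using gm prodf_meas[OF v] by measurable
    show "(\<lambda>x. g x * prodf (u m) x) \<in> borel_measurable (lebesgue_on unit_cube)" for m
      using gm prodf_meas[OF su] by measurable
    show "integrable (lebesgue_on unit_cube) (\<lambda>x. \<bar>g x\<bar> * (\<Prod>i\<in>UNIV. B i))"
      using gi by (intro integrable_mult_left integrable_abs)
    show "AE x in lebesgue_on unit_cube. (\<lambda>m. g x * prodf (u m) x) \<longlonglongrightarrow> g x * prodf v x"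
      using AE_box by eventually_elim (use conv in \<open>auto intro: tendsto_mult tendsto_const\<close>)
    show "AE x in lebesgue_on unit_cube. norm (g x * prodf (u m) x) \<le> \<bar>g x\<bar> * (\<Prod>i\<in>UNIV. B i)" for m
    proof (rule AE_I2)
      fix x :: "real^'n" assume "x \<in> space (lebesgue_on unit_cube)"
      then have x: "x \<in> unit_cube" by simp
      have "\<bar>prodf (u m) x\<bar> \<le> (\<Prod>i\<in>UNIV. B i)"
        unfolding prodf_def by (rule prod_abs_bound) (use bu cube_comp[OF x] in blast)
      then show "norm (g x * prodf (u m) x) \<le> \<bar>g x\<bar> * (\<Prod>i\<in>UNIV. B i)"
        by (simp add: abs_mult mult_left_mono)
    qed
  qed
  have "integral\<^sup>L (lebesgue_on unit_cube) (\<lambda>x. f x * prodf Dv x) = integral\<^sup>L (lebesgue_on unit_cube) (\<lambda>x. g x * prodf v x)"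
    using LIMSEQ_unique[OF lim1[unfolded eqm] lim2] .
  then show ?thesis by (simp add: Dv_def)
qed

definition ms :: "'n::finite set \<Rightarrow> 'n \<Rightarrow> real" where
  "ms s i = (if i \<in> s then -1/2 else 1/2)"
definition half :: "real^'n::finite" where "half = (\<chi> i. 1/2)"
definition sig :: "'n::finite set \<Rightarrow> real^'n \<Rightarrow> real^'n" where
  "sig s x = (\<chi> k. ms s k * x$k) + half"
definition lo :: "'n::finite set \<Rightarrow> real^'n" where
  "lo s = (\<chi> i. if i \<in> s then 0 else 1/2)"
definition hi :: "'n::finite set \<Rightarrow> real^'n" where
  "hi s = (\<chi> i. if i \<in> s then 1/2 else 1)"

lemma ms_nz: "ms s k \<noteq> 0" by (simp add: ms_def)

lemma img_transl: "(\<lambda>x. x - half) ` cbox (lo s) (hi s) = cbox (lo s - half) (hi s - half)"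
proof -
  have "cbox (lo s - half) (hi s - half) = (+) (- half) ` cbox (lo s) (hi s)"
    using cbox_translation[of "- half" "lo s" "hi s"] by (simp add: add.commute)
  also have "(+) (- half) = (\<lambda>x. x - half)" by (simp add: fun_eq_iff)
  finally show ?thesis by simp
qed

lemma img_stretch: "(\<lambda>x. \<chi> k. x$k / ms s k) ` cbox (lo s - half) (hi s - half) = (unit_cube :: (real^'n::finite) set)"
proof -
  have eq: "(\<lambda>x. \<chi> k. x$k / ms s k) = (\<lambda>x::real^'n. \<chi> k. (1 / ms s k) * x$k)"
    by (simp add: fun_eq_iff)
  have ne: "cbox (lo s - half) (hi s - half) \<noteq> ({} :: (real^'n) set)"
    by (auto simp: interval_ne_empty_cart lo_def hi_def half_def)
  have "(\<chi> k. min (1 / ms s k * (lo s - half) $ k) (1 / ms s k * (hi s - half) $ k)) = (0::real^'n)"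
    by (auto simp: vec_eq_iff ms_def lo_def hi_def half_def)
  moreover have "(\<chi> k. max (1 / ms s k * (lo s - half) $ k) (1 / ms s k * (hi s - half) $ k)) = (1::real^'n)"
    by (auto simp: vec_eq_iff ms_def lo_def hi_def half_def)
  ultimately show ?thesis
    unfolding eq image_stretch_interval_cart using ne by (simp add: unit_cube_def)
qed

lemma prod_ms: fixes s :: "'n::finite set" shows "\<bar>prod (ms s) (UNIV::'n set)\<bar> = (1/2) ^ CARD('n)"
proof -
  have "\<bar>prod (ms s) (UNIV::'n set)\<bar> = (\<Prod>i\<in>(UNIV::'n set). \<bar>ms s i\<bar>)" by (rule abs_prod)
  also have "\<dots> = (\<Prod>i\<in>(UNIV::'n set). 1/2)" by (rule prod.cong) (auto simp: ms_def)
  finally show ?thesis by simp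
qed

lemma piece_cov:
  fixes u :: "real^'n::finite \<Rightarrow> complex"
  assumes "(u has_integral J) (cbox (lo s) (hi s))"
  shows "((\<lambda>x. u (sig s x)) has_integral (2 ^ CARD('n) *\<^sub>R J)) unit_cube"
proof -
  have "((\<lambda>x. u (1 *\<^sub>R x + half)) has_integral (1 / (\<bar>1::real\<bar> ^ DIM(real^'n))) *\<^sub>R J)
      ((\<lambda>x. (1 / 1) *\<^sub>R x + - ((1 / 1) *\<^sub>R half)) ` cbox (lo s) (hi s))"
    by (rule has_integral_affinity[OF assms]) simp
  then have "((\<lambda>x. u (x + half)) has_integral J) ((\<lambda>x. x - half) ` cbox (lo s) (hi s))"
    by simp
  then have "((\<lambda>x. u (x + half)) has_integral J) (cbox (lo s - half) (hi s - half))"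
    unfolding img_transl .
  from has_integral_stretch_cart[OF this, of "ms s", OF ms_nz]
  have "((\<lambda>x. u ((\<chi> k. ms s k * x$k) + half)) has_integral J /\<^sub>R \<bar>prod (ms s) UNIV\<bar>) unit_cube"
    unfolding img_stretch .
  moreover have "J /\<^sub>R \<bar>prod (ms s) UNIV\<bar> = 2 ^ CARD('n) *\<^sub>R J"
    unfolding prod_ms by (simp add: power_divide)
  ultimately show ?thesis by (simp add: sig_def)
qed

lemma cis_sum: "finite A \<Longrightarrow> cis (\<Sum>i\<in>A. a i) = (\<Prod>i\<in>A. cis (a i))"
  by (simp add: cis_conv_exp sum_distrib_left exp_sum)

lemma sin_pi_int: "sin (pi * real_of_int n) = 0"
  using sin_times_pi_eq_0[of "real_of_int n"] by (simp add: mult.commute)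

lemma pair_cis0: "sin ph = 0 \<Longrightarrow> cis (th - ph) + cis (- th - ph) = 2 * complex_of_real (cos ph * cos th)"
  by (simp add: complex_eq_iff cos_diff sin_diff cos_add sin_add)

lemma pair_cis: "cis (- 2 * pi * (real_of_int n * ((-1/2) * x + 1/2))) + cis (- 2 * pi * (real_of_int n * ((1/2) * x + 1/2)))
   = 2 * complex_of_real (cos (pi * real_of_int n) * cos (pi * real_of_int n * x))"
proof -
  define th where "th = pi * real_of_int n * x"
  define ph where "ph = pi * real_of_int n"
  have a: "- 2 * pi * (real_of_int n * ((-1/2) * x + 1/2)) = th - ph" by (simp add: th_def ph_def algebra_simps)
  have b: "- 2 * pi * (real_of_int n * ((1/2) * x + 1/2)) = - th - ph" by (simp add: th_def ph_def algebra_simps)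
  have sp: "sin ph = 0" by (simp add: ph_def sin_pi_int)
  show ?thesis unfolding a b unfolding th_def[symmetric] unfolding ph_def[symmetric]
    by (rule pair_cis0[OF sp])
qed

lemma sum_sig:
  fixes k :: "int^'n::finite" and x :: "real^'n"
  shows "(\<Sum>s\<in>Pow UNIV. cis (- 2 * pi * (\<Sum>i\<in>UNIV. real_of_int (k$i) * (sig s x)$i)))
     = 2 ^ CARD('n) * complex_of_real (prodf (\<lambda>i t. cos (pi * real_of_int (k$i)) * cos (pi * real_of_int (k$i) * t)) x)"
proof -
  define al where "al = (\<lambda>i. cis (- 2 * pi * (real_of_int (k$i) * ((-1/2) * x$i + 1/2))))"
  define be where "be = (\<lambda>i. cis (- 2 * pi * (real_of_int (k$i) * ((1/2) * x$i + 1/2))))"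
  have "cis (- 2 * pi * (\<Sum>i\<in>UNIV. real_of_int (k$i) * (sig s x)$i)) = (\<Prod>i\<in>UNIV. if i \<in> s then al i else be i)" for s
  proof -
    have "cis (- 2 * pi * (\<Sum>i\<in>UNIV. real_of_int (k$i) * (sig s x)$i)) = cis (\<Sum>i\<in>UNIV. - 2 * pi * (real_of_int (k$i) * (sig s x)$i))"
      by (simp add: sum_distrib_left)
    also have "\<dots> = (\<Prod>i\<in>UNIV. cis (- 2 * pi * (real_of_int (k$i) * (sig s x)$i)))" by (simp add: cis_sum)
    also have "\<dots> = (\<Prod>i\<in>UNIV. if i \<in> s then al i else be i)"
      by (rule prod.cong) (auto simp: al_def be_def sig_def ms_def half_def)
    finally show ?thesis .
  qed
  then have "(\<Sum>s\<in>Pow UNIV. cis (- 2 * pi * (\<Sum>i\<in>UNIV. real_of_int (k$i) * (sig s x)$i)))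
      = (\<Sum>s\<in>Pow UNIV. prod al s * prod be (UNIV - s))"
    by (intro sum.cong) (auto simp: prod.If_cases Int_absorb1 Compl_eq_Diff_UNIV)
  also have "\<dots> = (\<Prod>i\<in>UNIV. al i + be i)" by (rule prod_add[symmetric]) simp
  also have "\<dots> = (\<Prod>i\<in>UNIV. 2 * complex_of_real (cos (pi * real_of_int (k$i)) * cos (pi * real_of_int (k$i) * x$i)))"
    by (rule prod.cong) (simp_all only: al_def be_def pair_cis)
  also have "\<dots> = 2 ^ CARD('n) * complex_of_real (prodf (\<lambda>i t. cos (pi * real_of_int (k$i)) * cos (pi * real_of_int (k$i) * t)) x)"
    by (simp add: prod.distrib prodf_def)
  finally show ?thesis .
qed

definition Cb :: "'n::finite set \<Rightarrow> (real^'n) set" where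
  "Cb s = cbox (lo s) (hi s)"

lemma Cb_sub: "Cb s \<subseteq> unit_cube"
proof
  fix x assume x: "x \<in> Cb s"
  have "0 \<le> x$i \<and> x$i \<le> 1" for i
  proof -
    have "lo s $ i \<le> x$i \<and> x$i \<le> hi s $ i" using x by (simp add: Cb_def mem_box_cart)
    then show ?thesis by (auto simp: lo_def hi_def split: if_splits)
  qed
  then show "x \<in> unit_cube" by (simp add: unit_cube_def mem_box_cart)
qed

lemma Cb_ne: "Cb s \<noteq> {}"
  by (auto simp: Cb_def interval_ne_empty_cart lo_def hi_def)

lemma Cb_int: "s \<noteq> s' \<Longrightarrow> interior (Cb s) \<inter> interior (Cb s') = {}"
proof -
  assume "s \<noteq> s'"
  then obtain i where i: "(i \<in> s \<and> i \<notin> s') \<or> (i \<notin> s \<and> i \<in> s')" by blast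
  show ?thesis
  proof (rule ccontr)
    assume "interior (Cb s) \<inter> interior (Cb s') \<noteq> {}"
    then obtain x where "x \<in> box (lo s) (hi s)" "x \<in> box (lo s') (hi s')"
      by (auto simp: Cb_def interior_cbox)
    then have "lo s $ i < x $ i \<and> x $ i < hi s $ i" "lo s' $ i < x $ i \<and> x $ i < hi s' $ i"
      by (auto simp: mem_box_cart)
    then show False using i by (auto simp: lo_def hi_def)
  qed
qed

lemma Cb_union: "\<Union> (Cb ` Pow UNIV) = (unit_cube :: (real^'n::finite) set)"
proof
  show "\<Union> (Cb ` Pow UNIV) \<subseteq> (unit_cube :: (real^'n::finite) set)" using Cb_sub by blast
  show "(unit_cube :: (real^'n::finite) set) \<subseteq> \<Union> (Cb ` Pow UNIV)"
  proof
    fix x :: "real^'n" assume x: "x \<in> unit_cube"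
    define s where "s = {i. x$i \<le> 1/2}"
    have "x \<in> Cb s" using x by (auto simp: Cb_def unit_cube_def mem_box_cart lo_def hi_def s_def)
    then show "x \<in> \<Union> (Cb ` Pow UNIV)" by blast
  qed
qed

lemma Cb_inj: "inj_on (Cb :: 'n::finite set \<Rightarrow> _) (Pow UNIV)"
proof (rule inj_onI)
  fix s s' :: "'n set" assume "Cb s = Cb s'"
  then have "lo s = lo s'" using Cb_ne[of s] by (simp add: Cb_def eq_cbox)
  have key: "i \<in> t \<longleftrightarrow> lo t $ i = 0" for t :: "'n set" and i by (simp add: lo_def)
  show "s = s'"
  proof (rule set_eqI)
    fix i show "i \<in> s \<longleftrightarrow> i \<in> s'" using key[of i s] key[of i s'] \<open>lo s = lo s'\<close> by simp
  qed
qed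

lemma Cb_div: "(Cb ` Pow UNIV) division_of (unit_cube :: (real^'n::finite) set)"
proof (rule division_ofI)
  show "finite (Cb ` Pow (UNIV :: 'n set))" by simp
  show "K \<subseteq> unit_cube" if "K \<in> Cb ` Pow UNIV" for K using that Cb_sub by blast
  show "K \<noteq> {}" if "K \<in> Cb ` Pow UNIV" for K using that Cb_ne by blast
  show "\<exists>a b. K = cbox a b" if "K \<in> Cb ` Pow UNIV" for K using that by (auto simp: Cb_def)
  show "interior K1 \<inter> interior K2 = {}" if k1: "K1 \<in> Cb ` Pow UNIV" and k2: "K2 \<in> Cb ` Pow UNIV" and ne: "K1 \<noteq> K2" for K1 K2
  proof -
    obtain s s' where "K1 = Cb s" "K2 = Cb s'" using k1 k2 by blast
    then show ?thesis using Cb_int[of s s'] ne by blast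
  qed
  show "\<Union> (Cb ` Pow UNIV) = unit_cube" by (rule Cb_union)
qed

definition Gf :: "int^'n::finite \<Rightarrow> real^'n \<Rightarrow> real" where
  "Gf k = prodf (\<lambda>i t. cos (pi * real_of_int (k$i)) * cos (pi * real_of_int (k$i) * t))"

lemma smooth1_cos_lin: "smooth1 (\<lambda>t. cos (a * t))"
  using smooth1_affine[OF smooth1_cos, of a 0] by simp

lemma Gf_bound: fixes k :: "int^'n::finite" shows "\<bar>Gf k x\<bar> \<le> 1"
proof -
  have "\<bar>Gf k x\<bar> \<le> (\<Prod>i\<in>(UNIV::'n set). (1::real))" unfolding Gf_def prodf_def
    unfolding abs_prod by (rule prod_mono) (simp add: abs_mult mult_le_one)
  then show ?thesis by simp
qed

lemma Gf_meas: "Gf k \<in> borel_measurable (lebesgue_on unit_cube)"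
  unfolding Gf_def
  by (rule prodf_meas, rule allI, rule smooth1_mult[OF smooth1_const smooth1_cos_lin])

lemma integrable_mult_bounded:
  fixes f h :: "real^'n::finite \<Rightarrow> real"
  assumes f: "integrable (lebesgue_on unit_cube) f" and h: "h \<in> borel_measurable (lebesgue_on unit_cube)"
    and b: "\<And>x. x \<in> unit_cube \<Longrightarrow> \<bar>h x\<bar> \<le> K"
  shows "integrable (lebesgue_on unit_cube) (\<lambda>x. f x * h x)"
proof (rule Bochner_Integration.integrable_bound[of _ "\<lambda>x. \<bar>K\<bar> * \<bar>f x\<bar>"])
  show "integrable (lebesgue_on unit_cube) (\<lambda>x. \<bar>K\<bar> * \<bar>f x\<bar>)" using f by (intro integrable_mult_right integrable_abs)
  show "(\<lambda>x. f x * h x) \<in> borel_measurable (lebesgue_on unit_cube)"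
    using f h by (intro borel_measurable_times) auto
  show "AE x in lebesgue_on unit_cube. norm (f x * h x) \<le> norm (\<bar>K\<bar> * \<bar>f x\<bar>)"
  proof (rule AE_I2)
    fix x assume "x \<in> space (lebesgue_on (unit_cube :: (real^'n) set))"
    then have "\<bar>h x\<bar> \<le> K" using b by simp
    then show "norm (f x * h x) \<le> norm (\<bar>K\<bar> * \<bar>f x\<bar>)"
    proof -
      have "\<bar>f x\<bar> * \<bar>h x\<bar> \<le> \<bar>f x\<bar> * \<bar>K\<bar>" using \<open>\<bar>h x\<bar> \<le> K\<close> by (intro mult_left_mono) auto
      then show ?thesis by (simp add: abs_mult mult.commute)
    qed
  qed
qed

lemma tent_sig: "x \<in> unit_cube \<Longrightarrow> tent f (sig s x) = f x"
proof -
  assume x: "x \<in> unit_cube"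
  have "(\<chi> i. \<bar>2 * sig s x $ i - 1\<bar>) = x"
  proof (subst vec_eq_iff, rule allI)
    fix i
    have "0 \<le> x$i" using x by (simp add: unit_cube_def mem_box_cart)
    then show "(\<chi> i. \<bar>2 * sig s x $ i - 1\<bar>) $ i = x $ i"
      by (simp add: sig_def ms_def half_def)
  qed
  then show ?thesis by (simp add: tent_def)
qed

lemma fourier_tent:
  fixes f :: "real^'n::finite \<Rightarrow> real" and k :: "int^'n"
  assumes Lf: "L2_cube f"
    and int: "integrable (lebesgue_on unit_cube)
       (\<lambda>x. complex_of_real (tent f x) * cis (- 2 * pi * (\<Sum>i\<in>UNIV. of_int (k$i) * x$i)))"
  shows "fourier_coeff (tent f) k = complex_of_real (integral\<^sup>L (lebesgue_on unit_cube) (\<lambda>x. f x * Gf k x))"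
proof -
  define u where "u = (\<lambda>x. complex_of_real (tent f x) * cis (- 2 * pi * (\<Sum>i\<in>UNIV. of_int (k$i) * x$i)))"
  define FC where "FC = fourier_coeff (tent f) k"
  have FCu: "FC = integral\<^sup>L (lebesgue_on unit_cube) u" by (simp add: FC_def fourier_coeff_def u_def)
  have hu: "(u has_integral FC) unit_cube"
    unfolding FCu by (rule has_integral_integral_lebesgue_on[OF int[folded u_def] cube_sets])
  then have ui: "u integrable_on unit_cube" by blast
  have "(u has_integral (\<Sum>K\<in>Cb ` Pow UNIV. integral K u)) unit_cube"
    by (rule has_integral_combine_division_topdown[OF ui Cb_div]) simp
  then have FCsum: "FC = (\<Sum>s\<in>Pow UNIV. integral (Cb s) u)"
    using has_integral_unique[OF hu] sum.reindex[OF Cb_inj, of "\<lambda>K. integral K u"] by (simp add: o_def)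
  have pc: "((\<lambda>x. complex_of_real (f x) * cis (- 2 * pi * (\<Sum>i\<in>UNIV. of_int (k$i) * (sig s x)$i)))
       has_integral (2 ^ CARD('n) *\<^sub>R integral (Cb s) u)) unit_cube" for s
  proof -
    have "(u has_integral integral (Cb s) u) (cbox (lo s) (hi s))"
      using integrable_on_subcbox[OF ui Cb_sub[of s, unfolded Cb_def]] by (simp add: Cb_def integrable_integral)
    from piece_cov[OF this]
    show ?thesis by (rule has_integral_eq[rotated]) (simp add: u_def tent_sig)
  qed
  have A: "((\<lambda>x. \<Sum>s\<in>Pow UNIV. complex_of_real (f x) * cis (- 2 * pi * (\<Sum>i\<in>UNIV. of_int (k$i) * (sig s x)$i)))
       has_integral (\<Sum>s\<in>Pow UNIV. 2 ^ CARD('n) *\<^sub>R integral (Cb s) u)) unit_cube"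
    by (rule has_integral_sum[OF _ pc]) simp
  have B: "(\<Sum>s\<in>Pow UNIV. 2 ^ CARD('n) *\<^sub>R integral (Cb s) u) = 2 ^ CARD('n) * FC"
    by (simp add: FCsum scaleR_conv_of_real sum_distrib_left)
  have C: "(\<lambda>x. \<Sum>s\<in>Pow UNIV. complex_of_real (f x) * cis (- 2 * pi * (\<Sum>i\<in>UNIV. of_int (k$i) * (sig s x)$i)))
      = (\<lambda>x. 2 ^ CARD('n) * complex_of_real (f x * Gf k x))"
  proof
    fix x
    have "(\<Sum>s\<in>Pow UNIV. complex_of_real (f x) * cis (- 2 * pi * (\<Sum>i\<in>UNIV. of_int (k$i) * (sig s x)$i)))
       = complex_of_real (f x) * (\<Sum>s\<in>Pow UNIV. cis (- 2 * pi * (\<Sum>i\<in>UNIV. of_int (k$i) * (sig s x)$i)))"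
      by (rule sum_distrib_left[symmetric])
    also have "\<dots> = complex_of_real (f x) * (2 ^ CARD('n) * complex_of_real (Gf k x))"
      unfolding sum_sig Gf_def ..
    finally show "(\<Sum>s\<in>Pow UNIV. complex_of_real (f x) * cis (- 2 * pi * (\<Sum>i\<in>UNIV. of_int (k$i) * (sig s x)$i)))
      = 2 ^ CARD('n) * complex_of_real (f x * Gf k x)" by simp
  qed
  have h1: "((\<lambda>x. 2 ^ CARD('n) * complex_of_real (f x * Gf k x)) has_integral (2 ^ CARD('n) * FC)) unit_cube"
    using A unfolding B C .
  have fgi: "integrable (lebesgue_on unit_cube) (\<lambda>x. f x * Gf k x)"
    by (rule integrable_mult_bounded[OF L2_integrable[OF Lf] Gf_meas Gf_bound])
  have "((\<lambda>x. f x * Gf k x) has_integral integral\<^sup>L (lebesgue_on unit_cube) (\<lambda>x. f x * Gf k x)) unit_cube"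
    by (rule has_integral_integral_lebesgue_on[OF fgi cube_sets])
  from has_integral_linear[OF this bounded_linear_of_real]
  have "((\<lambda>x. complex_of_real (f x * Gf k x)) has_integral complex_of_real (integral\<^sup>L (lebesgue_on unit_cube) (\<lambda>x. f x * Gf k x))) unit_cube"
    by (simp add: o_def)
  then have h2: "((\<lambda>x. 2 ^ CARD('n) * complex_of_real (f x * Gf k x)) has_integral
     2 ^ CARD('n) * complex_of_real (integral\<^sup>L (lebesgue_on unit_cube) (\<lambda>x. f x * Gf k x))) unit_cube"
    by (rule has_integral_mult_right)
  have "2 ^ CARD('n) * FC = 2 ^ CARD('n) * complex_of_real (integral\<^sup>L (lebesgue_on unit_cube) (\<lambda>x. f x * Gf k x))"
    using has_integral_unique[OF h1 h2] .
  then show ?thesis by (simp add: FC_def)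
qed

lemma int_const_cube: "integral\<^sup>L (lebesgue_on (unit_cube :: (real^'n::finite) set)) (\<lambda>x. c) = (c::real)"
proof -
  have h1: "((\<lambda>x. c) has_integral integral\<^sup>L (lebesgue_on (unit_cube :: (real^'n) set)) (\<lambda>x. c)) (unit_cube :: (real^'n) set)"
    by (intro has_integral_integral_lebesgue_on integrable_const_cube cube_sets)
  have h2: "((\<lambda>x. c) has_integral Henstock_Kurzweil_Integration.content (unit_cube :: (real^'n) set) *\<^sub>R c) (unit_cube :: (real^'n) set)"
    unfolding unit_cube_def by (rule has_integral_const)
  have h3: "Henstock_Kurzweil_Integration.content (unit_cube :: (real^'n) set) = 1"
    unfolding unit_cube_def by (simp add: content_cbox_if_cart interval_ne_empty_cart)
  show ?thesis using has_integral_unique[OF h1 h2] h3 by simp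
qed

lemma meas_cube: "measure (lebesgue_on (unit_cube :: (real^'n::finite) set)) unit_cube = 1"
  using int_const_cube[of 1, where 'n='n] by (simp add: lebesgue_integral_const)

lemma L1_le_L2:
  fixes g :: "real^'n::finite \<Rightarrow> real"
  assumes Lg: "L2_cube g"
  shows "integral\<^sup>L (lebesgue_on unit_cube) (\<lambda>x. \<bar>g x\<bar>) \<le> sqrt (integral\<^sup>L (lebesgue_on unit_cube) (\<lambda>x. (g x)\<^sup>2))"
proof -
  define I where "I = integral\<^sup>L (lebesgue_on unit_cube) (\<lambda>x. (g x)\<^sup>2)"
  have i2: "integrable (lebesgue_on unit_cube) (\<lambda>x. (g x)\<^sup>2)" using Lg by (simp add: L2_cube_def)
  have i1: "integrable (lebesgue_on unit_cube) (\<lambda>x. \<bar>g x\<bar>)" using L2_integrable[OF Lg] by (rule integrable_abs)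
  have I0: "I \<ge> 0" unfolding I_def by (rule integral_nonneg_AE) simp
  have key: "integral\<^sup>L (lebesgue_on unit_cube) (\<lambda>x. \<bar>g x\<bar>) \<le> (I / t + t) / 2" if t: "t > 0" for t
  proof -
    have "integral\<^sup>L (lebesgue_on unit_cube) (\<lambda>x. \<bar>g x\<bar>) \<le> integral\<^sup>L (lebesgue_on unit_cube) (\<lambda>x. ((g x)\<^sup>2 / t + t) / 2)"
    proof (rule integral_mono[OF i1])
      show "integrable (lebesgue_on unit_cube) (\<lambda>x. ((g x)\<^sup>2 / t + t) / 2)"
        by (intro integrable_divide Bochner_Integration.integrable_add i2 integrable_const_cube)
      fix x
      have "0 \<le> (\<bar>g x\<bar> - t)\<^sup>2" by simp
      then have "2 * t * \<bar>g x\<bar> \<le> (g x)\<^sup>2 + t\<^sup>2" by (simp add: power2_eq_square algebra_simps)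
      then show "\<bar>g x\<bar> \<le> ((g x)\<^sup>2 / t + t) / 2" using t by (simp add: field_simps power2_eq_square)
    qed
    also have "\<dots> = (I / t + t) / 2"
      using i2 by (simp add: I_def int_const_cube integrable_const_cube meas_cube)
    finally show ?thesis .
  qed
  show ?thesis
  proof (cases "I > 0")
    case True
    have "integral\<^sup>L (lebesgue_on unit_cube) (\<lambda>x. \<bar>g x\<bar>) \<le> (I / sqrt I + sqrt I) / 2" using key True by simp
    also have "\<dots> = sqrt I" using True by (simp add: field_simps real_sqrt_divide del: real_sqrt_gt_0_iff)
    finally show ?thesis by (simp add: I_def)
  next
    case False
    then have "I = 0" using I0 by simp
    have "integral\<^sup>L (lebesgue_on unit_cube) (\<lambda>x. \<bar>g x\<bar>) \<le> 0"
    proof (rule field_le_epsilon)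
      fix e :: real assume "e > 0"
      then show "integral\<^sup>L (lebesgue_on unit_cube) (\<lambda>x. \<bar>g x\<bar>) \<le> 0 + e"
        using key[of e] \<open>I = 0\<close> by simp
    qed
    then show ?thesis by (simp add: I_def[symmetric] \<open>I = 0\<close>)
  qed
qed

lemma abs3sum: "\<bar>x\<bar> \<le> p \<Longrightarrow> \<bar>y\<bar> \<le> q \<Longrightarrow> \<bar>z\<bar> \<le> r \<Longrightarrow> \<bar>x - y - z\<bar> \<le> p + q + (r::real)"
  by linarith

lemma decomp1:
  fixes n :: int
  shows "\<exists>A R. smooth1 A \<and> smooth1 R \<and>
     (\<forall>t. A t + deriv (deriv R) t = cos (pi * real_of_int n) * cos (pi * real_of_int n * t)) \<and>
     R 0 = 0 \<and> deriv R 0 = 0 \<and> R 1 = 0 \<and> deriv R 1 = 0 \<and>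
     (\<forall>t\<in>{0..1}. \<bar>A t\<bar> \<le> 10 / (1 + \<bar>real_of_int n\<bar>)\<^sup>2 \<and> \<bar>R t\<bar> \<le> 10 / (1 + \<bar>real_of_int n\<bar>)\<^sup>2)"
proof (cases "n = 0")
  case True
  have "deriv (\<lambda>t::real. 0::real) = (\<lambda>t. 0)" by (rule ext) simp
  then show ?thesis using True
    by (intro exI[of _ "\<lambda>t. 1"] exI[of _ "\<lambda>t. 0"]) (simp add: smooth1_const)
next
  case False
  define w where "w = pi * real_of_int n"
  define c where "c = cos w"
  define B0 where "B0 = - c / w^2"
  define D where "D = (c - c * c) / w^2"
  define R where "R = (\<lambda>t. (- c / w^2) * cos (w * t) - B0 - D * (3 * t^2 - 2 * t^3))"
  define R1 where "R1 = (\<lambda>t. c * sin (w * t) / w - D * (6 * t - 6 * t^2))"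
  define R2 where "R2 = (\<lambda>t. c * cos (w * t) - D * (6 - 12 * t))"
  define A where "A = (\<lambda>t. D * (6 - 12 * t))"
  have wnz: "w \<noteq> 0" using False by (simp add: w_def)
  have dR: "(R has_real_derivative R1 t) (at t)" for t
    unfolding R_def R1_def using wnz
    by (auto intro!: derivative_eq_intros simp: field_simps power2_eq_square power3_eq_cube)
  have dR1: "(R1 has_real_derivative R2 t) (at t)" for t
    unfolding R1_def R2_def using wnz
    by (auto intro!: derivative_eq_intros simp: field_simps power2_eq_square)
  have deR: "deriv R = R1" by (rule ext) (rule DERIV_imp_deriv[OF dR])
  have deR1: "deriv R1 = R2" by (rule ext) (rule DERIV_imp_deriv[OF dR1])
  have sR: "smooth1 R" unfolding R_def
    by (intro smooth1_diff smooth1_mult smooth1_const smooth1_cos_lin smooth1_power smooth1_id)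
  have sA: "smooth1 A" unfolding A_def
    by (intro smooth1_diff smooth1_mult smooth1_const smooth1_id)
  have sw: "sin w = 0" by (simp add: w_def sin_pi_int)
  have eq: "A t + deriv (deriv R) t = cos (pi * real_of_int n) * cos (pi * real_of_int n * t)" for t
    by (simp add: deR deR1 A_def R2_def c_def w_def)
  have R0: "R 0 = 0" by (simp add: R_def B0_def)
  have R10: "deriv R 0 = 0" by (simp add: deR R1_def)
  have R1v: "R 1 = 0" using wnz by (simp add: R_def B0_def D_def c_def field_simps)
  have R11: "deriv R 1 = 0" by (simp add: deR R1_def sw)
  have n1: "1 \<le> \<bar>real_of_int n\<bar>" using False by linarith
  have w2: "w^2 \<ge> 9 * (real_of_int n)^2"
  proof -
    have "3 \<le> pi" using pi_gt3 by simp
    then have "3 * \<bar>real_of_int n\<bar> \<le> pi * \<bar>real_of_int n\<bar>" by (intro mult_right_mono) auto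
    then have "(3 * \<bar>real_of_int n\<bar>)^2 \<le> (pi * \<bar>real_of_int n\<bar>)^2" by (intro power_mono) auto
    then show ?thesis by (simp add: w_def power_mult_distrib)
  qed
  have q: "(1 + \<bar>real_of_int n\<bar>)^2 \<le> 4 * (real_of_int n)^2"
  proof -
    have "1 + \<bar>real_of_int n\<bar> \<le> 2 * \<bar>real_of_int n\<bar>" using n1 by simp
    then have "(1 + \<bar>real_of_int n\<bar>)^2 \<le> (2 * \<bar>real_of_int n\<bar>)^2" by (intro power_mono) auto
    then show ?thesis by (simp add: power_mult_distrib)
  qed
  have n2pos: "(real_of_int n)^2 > 0" using False by simp
  have w2pos: "w^2 > 0" using wnz by simp
  have small: "12 / w^2 \<le> 10 / (1 + \<bar>real_of_int n\<bar>)\<^sup>2"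
  proof -
    have "12 / w^2 \<le> 12 / (9 * (real_of_int n)^2)" using w2 n2pos w2pos by (intro divide_left_mono) auto
    also have "\<dots> \<le> 10 / (4 * (real_of_int n)^2)" using n2pos by (simp add: field_simps)
    also have "\<dots> \<le> 10 / (1 + \<bar>real_of_int n\<bar>)\<^sup>2" using q n2pos by (intro divide_left_mono) auto
    finally show ?thesis .
  qed
  have cb: "\<bar>c\<bar> \<le> 1" by (simp add: c_def)
  have Db: "\<bar>D\<bar> \<le> 2 / w^2"
  proof -
    have cc: "\<bar>c * c\<bar> \<le> 1" unfolding abs_mult using cb by (rule mult_le_one) (simp_all add: cb)
    have "\<bar>c - c * c\<bar> \<le> \<bar>c\<bar> + \<bar>c * c\<bar>" by (rule abs_triangle_ineq4)
    then have "\<bar>c - c * c\<bar> \<le> 2" using cb cc by linarith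
    then show ?thesis unfolding D_def using w2pos by (simp add: abs_div divide_right_mono)
  qed
  have bounds: "\<bar>A t\<bar> \<le> 10 / (1 + \<bar>real_of_int n\<bar>)\<^sup>2 \<and> \<bar>R t\<bar> \<le> 10 / (1 + \<bar>real_of_int n\<bar>)\<^sup>2" if t: "t \<in> {0..1}" for t
  proof
    have l6: "\<bar>6 - 12 * t\<bar> \<le> 6" using t by auto
    have "\<bar>A t\<bar> \<le> (2 / w^2) * 6" unfolding A_def abs_mult using Db l6 by (intro mult_mono) auto
    then show "\<bar>A t\<bar> \<le> 10 / (1 + \<bar>real_of_int n\<bar>)\<^sup>2" using small by simp
    have p: "\<bar>3 * t^2 - 2 * t^3\<bar> \<le> 1"
    proof -
      have "0 \<le> t^2 * (3 - 2 * t)" using t by auto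
      moreover have "t^2 * (3 - 2 * t) \<le> 1"
      proof -
        have "0 \<le> (1 - t)^2 * (1 + 2 * t)" using t by auto
        then show ?thesis by (simp add: algebra_simps power2_eq_square power3_eq_cube)
      qed
      ultimately show ?thesis by (simp add: algebra_simps power2_eq_square power3_eq_cube)
    qed
    have t1: "\<bar>(- c / w^2) * cos (w * t)\<bar> \<le> 1 / w^2"
      using cb w2pos by (simp add: abs_mult abs_div divide_right_mono mult_le_one)
    have t2: "\<bar>B0\<bar> \<le> 1 / w^2" using cb w2pos by (simp add: B0_def abs_div divide_right_mono)
    have t3: "\<bar>D * (3 * t^2 - 2 * t^3)\<bar> \<le> 2 / w^2 * 1" unfolding abs_mult using Db p by (intro mult_mono) auto
    have "\<bar>R t\<bar> \<le> 1 / w^2 + 1 / w^2 + 2 / w^2" unfolding R_def using abs3sum[OF t1 t2 t3] by simp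
    also have "\<dots> \<le> 12 / w^2" using w2pos by (simp add: field_simps)
    finally show "\<bar>R t\<bar> \<le> 10 / (1 + \<bar>real_of_int n\<bar>)\<^sup>2" using small by simp
  qed
  show ?thesis
    by (rule exI[of _ A], rule exI[of _ R]) (use sA sR eq R0 R10 R1v R11 bounds in blast)
qed

lemma prodf_bounded:
  fixes w :: "'n::finite \<Rightarrow> real \<Rightarrow> real"
  assumes "\<forall>i. smooth1 (w i)" shows "\<exists>K. \<forall>x\<in>unit_cube. \<bar>prodf w x\<bar> \<le> K"
proof -
  have "\<forall>i. \<exists>B. \<forall>t\<in>{0..1}. \<bar>w i t\<bar> \<le> B" using smooth1_bounded_on assms by blast
  then obtain B where B: "\<And>i t. t \<in> {0..1} \<Longrightarrow> \<bar>w i t\<bar> \<le> B i" by metis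
  have "\<bar>prodf w x\<bar> \<le> (\<Prod>i\<in>UNIV. B i)" if "x \<in> unit_cube" for x :: "real^'n"
  proof -
    have "x$i \<in> {0..1}" for i using that by (simp add: unit_cube_def mem_box_cart)
    then show ?thesis unfolding prodf_def by (intro prod_abs_bound B)
  qed
  then show ?thesis by blast
qed

lemma weak_exists: "H2mix f \<Longrightarrow> is_weak_mixed_D2 e f (weak_mixed_D2 e f)"
proof -
  assume "H2mix f"
  then have "\<exists>g. is_weak_mixed_D2 e f g" by (simp add: H2mix_def)
  then show ?thesis unfolding weak_mixed_D2_def by (rule someI_ex)
qed

lemma norm_ge: 
  fixes f :: "real^'n::finite \<Rightarrow> real"
  assumes "H2mix f"
  shows "sqrt (integral\<^sup>L (lebesgue_on unit_cube) (\<lambda>x. (weak_mixed_D2 e f x)\<^sup>2)) \<le> H2mix_norm f"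
proof -
  have nn: "0 \<le> integral\<^sup>L (lebesgue_on unit_cube) (\<lambda>x. (weak_mixed_D2 e' f x)\<^sup>2)" for e'
    by (rule integral_nonneg_AE) simp
  have "integral\<^sup>L (lebesgue_on unit_cube) (\<lambda>x. (weak_mixed_D2 e f x)\<^sup>2)
      \<le> (\<Sum>e\<in>UNIV. integral\<^sup>L (lebesgue_on unit_cube) (\<lambda>x. (weak_mixed_D2 e f x)\<^sup>2))"
    by (rule member_le_sum) (auto intro: nn)
  then show ?thesis unfolding H2mix_norm_def by (rule real_sqrt_le_mono)
qed

lemma norm_nonneg: "H2mix_norm (f :: real^'n::finite \<Rightarrow> real) \<ge> 0"
proof -
  have "0 \<le> (\<Sum>e\<in>UNIV. integral\<^sup>L (lebesgue_on unit_cube) (\<lambda>x. (weak_mixed_D2 e f x)\<^sup>2))"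
    by (intro sum_nonneg integral_nonneg_AE) simp
  then show ?thesis unfolding H2mix_norm_def by simp
qed

lemma prod_if_split:
  "(\<Prod>i\<in>(UNIV::'n::finite set). (if i \<in> e then F i else G i) (y i)) = (\<Prod>i\<in>e. F i (y i)) * (\<Prod>i\<in>UNIV - e. G i (y i))"
proof -
  have "(\<Prod>i\<in>(UNIV::'n set). (if i \<in> e then F i else G i) (y i)) = (\<Prod>i\<in>UNIV. if i \<in> e then F i (y i) else G i (y i))"
    by (rule prod.cong) auto
  also have "\<dots> = (\<Prod>i\<in>e. F i (y i)) * (\<Prod>i\<in>UNIV - e. G i (y i))"
    by (simp add: prod.If_cases Compl_eq_Diff_UNIV)
  finally show ?thesis .
qed

lemma main_bound:
  fixes f :: "real^'n::finite \<Rightarrow> real" and k :: "int^'n"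
  assumes H: "H2mix f"
  shows "\<bar>integral\<^sup>L (lebesgue_on unit_cube) (\<lambda>x. f x * Gf k x)\<bar>
     \<le> 2 ^ CARD('n) * (\<Prod>i\<in>UNIV. 10 / (1 + \<bar>real_of_int (k$i)\<bar>)\<^sup>2) * H2mix_norm f"
proof -
  define P where "P = (\<lambda>i A R. smooth1 A \<and> smooth1 R \<and>
     (\<forall>t. A t + deriv (deriv R) t = cos (pi * real_of_int (k$i)) * cos (pi * real_of_int (k$i) * t)) \<and>
     R 0 = 0 \<and> deriv R 0 = 0 \<and> R 1 = 0 \<and> deriv R 1 = 0 \<and>
     (\<forall>t\<in>{0..1}. \<bar>A t\<bar> \<le> 10 / (1 + \<bar>real_of_int (k$i)\<bar>)\<^sup>2 \<and> \<bar>R t\<bar> \<le> 10 / (1 + \<bar>real_of_int (k$i)\<bar>)\<^sup>2))"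
  have "\<forall>i. \<exists>AR. P i (fst AR) (snd AR)" unfolding P_def using decomp1 by simp
  then obtain F where F: "\<forall>i. P i (fst (F i)) (snd (F i))" by (metis choice)
  define A where "A = (\<lambda>i. fst (F i))"
  define R where "R = (\<lambda>i. snd (F i))"
  have AR: "P i (A i) (R i)" for i using F by (simp add: A_def R_def)
  have sA: "smooth1 (A i)" and sR: "smooth1 (R i)" for i using AR by (simp_all add: P_def)
  have AReq: "A i t + deriv (deriv (R i)) t = cos (pi * real_of_int (k$i)) * cos (pi * real_of_int (k$i) * t)" for i t
    using AR by (simp add: P_def)
  define b where "b = (\<lambda>i. 10 / (1 + \<bar>real_of_int (k$i)\<bar>)\<^sup>2)"
  have bA: "\<bar>A i t\<bar> \<le> b i" and bR: "\<bar>R i t\<bar> \<le> b i" if "t \<in> {0..1}" for i t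
    using AR that by (simp_all add: P_def b_def)
  have bc: "R i 0 = 0 \<and> deriv (R i) 0 = 0 \<and> R i 1 = 0 \<and> deriv (R i) 1 = 0" for i
    using AR by (simp add: P_def)
  define N where "N = H2mix_norm f"
  define DV where "DV = (\<lambda>e i. if i \<in> e then deriv (deriv (R i)) else A i)"
  define ve where "ve = (\<lambda>e i. if i \<in> e then R i else A i)"
  define g where "g = (\<lambda>e. weak_mixed_D2 e f)"
  have W: "is_weak_mixed_D2 e f (g e)" for e using weak_exists[OF H] by (simp add: g_def)
  have Lf: "L2_cube f" using H by (simp add: H2mix_def)
  have Lg: "L2_cube (g e)" for e using W[of e] by (simp add: is_weak_mixed_D2_def)
  have fi: "integrable (lebesgue_on unit_cube) f" by (rule L2_integrable[OF Lf])
  have sDV: "\<forall>i. smooth1 (DV e i)" for e by (simp add: DV_def sA smooth1_deriv sR)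
  have sve: "\<forall>i. smooth1 (ve e i)" for e by (simp add: ve_def sA sR)
  have expand: "Gf k x = (\<Sum>e\<in>Pow UNIV. prodf (DV e) x)" for x :: "real^'n"
  proof -
    have "Gf k x = (\<Prod>i\<in>UNIV. deriv (deriv (R i)) (x$i) + A i (x$i))"
      unfolding Gf_def prodf_def by (rule prod.cong[OF refl]) (metis AReq add.commute)
    also have "\<dots> = (\<Sum>e\<in>Pow UNIV. (\<Prod>i\<in>e. deriv (deriv (R i)) (x$i)) * (\<Prod>i\<in>UNIV - e. A i (x$i)))"
      by (rule prod_add) simp
    also have "\<dots> = (\<Sum>e\<in>Pow UNIV. prodf (DV e) x)"
      unfolding prodf_def DV_def by (rule sum.cong[OF refl]) (rule prod_if_split[symmetric])
    finally show ?thesis .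
  qed
  have intDV: "integrable (lebesgue_on unit_cube) (\<lambda>x. f x * prodf (DV e) x)" for e
  proof -
    obtain K where K: "\<forall>x\<in>unit_cube. \<bar>prodf (DV e) x\<bar> \<le> K" using prodf_bounded[OF sDV] by blast
    show ?thesis by (rule integrable_mult_bounded[OF fi prodf_meas[OF sDV]]) (use K in blast)
  qed
  have eq1: "integral\<^sup>L (lebesgue_on unit_cube) (\<lambda>x. f x * Gf k x)
      = (\<Sum>e\<in>Pow UNIV. integral\<^sup>L (lebesgue_on unit_cube) (\<lambda>x. f x * prodf (DV e) x))"
  proof -
    have "integral\<^sup>L (lebesgue_on unit_cube) (\<lambda>x. f x * Gf k x)
        = integral\<^sup>L (lebesgue_on unit_cube) (\<lambda>x. \<Sum>e\<in>Pow UNIV. f x * prodf (DV e) x)"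
      by (simp add: expand sum_distrib_left)
    also have "\<dots> = (\<Sum>e\<in>Pow UNIV. integral\<^sup>L (lebesgue_on unit_cube) (\<lambda>x. f x * prodf (DV e) x))"
      by (rule Bochner_Integration.integral_sum) (rule intDV)
    finally show ?thesis .
  qed
  have eq2: "integral\<^sup>L (lebesgue_on unit_cube) (\<lambda>x. f x * prodf (DV e) x)
      = integral\<^sup>L (lebesgue_on unit_cube) (\<lambda>x. g e x * prodf (ve e) x)" for e
  proof -
    have "prodf (\<lambda>i. if i \<in> e then deriv (deriv (ve e i)) else ve e i) = prodf (DV e)"
      by (rule arg_cong[where f=prodf]) (auto simp: fun_eq_iff ve_def DV_def)
    moreover have "\<forall>i\<in>e. ve e i 0 = 0 \<and> deriv (ve e i) 0 = 0 \<and> ve e i 1 = 0 \<and> deriv (ve e i) 1 = 0"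
      using bc by (simp add: ve_def)
    ultimately show ?thesis using ext_weak[OF W[of e] Lf sve[of e]] by simp
  qed
  define Pb where "Pb = (\<Prod>i\<in>UNIV. b i)"
  have Pb0: "Pb \<ge> 0" unfolding Pb_def b_def by (intro prod_nonneg) auto
  have bound_e: "\<bar>integral\<^sup>L (lebesgue_on unit_cube) (\<lambda>x. g e x * prodf (ve e) x)\<bar> \<le> Pb * N" for e
  proof -
    have gi: "integrable (lebesgue_on unit_cube) (g e)" by (rule L2_integrable[OF Lg])
    have bve: "\<bar>prodf (ve e) x\<bar> \<le> Pb" if "x \<in> unit_cube" for x :: "real^'n"
    proof -
      have "x$i \<in> {0..1}" for i using that by (simp add: unit_cube_def mem_box_cart)
      then show ?thesis unfolding prodf_def Pb_def ve_def by (intro prod_abs_bound) (auto intro: bA bR)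
    qed
    have i1: "integrable (lebesgue_on unit_cube) (\<lambda>x. g e x * prodf (ve e) x)"
      by (rule integrable_mult_bounded[OF gi prodf_meas[OF sve]]) (use bve in blast)
    have "\<bar>integral\<^sup>L (lebesgue_on unit_cube) (\<lambda>x. g e x * prodf (ve e) x)\<bar>
        \<le> integral\<^sup>L (lebesgue_on unit_cube) (\<lambda>x. \<bar>g e x * prodf (ve e) x\<bar>)"
      using integral_norm_bound[of "lebesgue_on unit_cube" "\<lambda>x. g e x * prodf (ve e) x"] by simp
    also have "\<dots> \<le> integral\<^sup>L (lebesgue_on unit_cube) (\<lambda>x. Pb * \<bar>g e x\<bar>)"
    proof (rule integral_mono)
      show "integrable (lebesgue_on unit_cube) (\<lambda>x. \<bar>g e x * prodf (ve e) x\<bar>)" using i1 by (rule integrable_abs)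
      show "integrable (lebesgue_on unit_cube) (\<lambda>x. Pb * \<bar>g e x\<bar>)" using gi by (intro integrable_mult_right integrable_abs)
      fix x assume "x \<in> space (lebesgue_on (unit_cube :: (real^'n) set))"
      then have "\<bar>prodf (ve e) x\<bar> \<le> Pb" using bve by simp
      then have "\<bar>g e x\<bar> * \<bar>prodf (ve e) x\<bar> \<le> \<bar>g e x\<bar> * Pb" by (intro mult_left_mono) auto
      then show "\<bar>g e x * prodf (ve e) x\<bar> \<le> Pb * \<bar>g e x\<bar>"
        by (simp add: abs_mult mult.commute)
    qed
    also have "\<dots> = Pb * integral\<^sup>L (lebesgue_on unit_cube) (\<lambda>x. \<bar>g e x\<bar>)" by simp
    also have "\<dots> \<le> Pb * N"
    proof (rule mult_left_mono[OF _ Pb0])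
      have "integral\<^sup>L (lebesgue_on unit_cube) (\<lambda>x. \<bar>g e x\<bar>) \<le> sqrt (integral\<^sup>L (lebesgue_on unit_cube) (\<lambda>x. (g e x)\<^sup>2))"
        by (rule L1_le_L2[OF Lg])
      also have "\<dots> \<le> N" unfolding N_def g_def by (rule norm_ge[OF H])
      finally show "integral\<^sup>L (lebesgue_on unit_cube) (\<lambda>x. \<bar>g e x\<bar>) \<le> N" .
    qed
    finally show ?thesis .
  qed
  have "\<bar>integral\<^sup>L (lebesgue_on unit_cube) (\<lambda>x. f x * Gf k x)\<bar>
      \<le> (\<Sum>e\<in>Pow (UNIV::'n set). \<bar>integral\<^sup>L (lebesgue_on unit_cube) (\<lambda>x. g e x * prodf (ve e) x)\<bar>)"
    unfolding eq1 eq2 by (rule sum_abs)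
  also have "\<dots> \<le> (\<Sum>e\<in>Pow (UNIV::'n set). Pb * N)" by (rule sum_mono) (rule bound_e)
  also have "\<dots> = 2 ^ CARD('n) * Pb * N" by (simp add: card_Pow)
  finally show ?thesis by (simp add: Pb_def b_def N_def)
qed

theorem corollary6p3:
  "\<exists>C>0. \<forall>f :: real^'n::finite \<Rightarrow> real. H2mix f \<longrightarrow>
     (\<forall>k :: int^'n. cmod (fourier_coeff (tent f) k) * (\<Prod>i\<in>UNIV. (1 + \<bar>real_of_int (k$i)\<bar>)\<^sup>2)
        \<le> C * H2mix_norm f)"
proof (intro exI[of _ "20 ^ CARD('n)"] conjI allI impI)
  show "(0::real) < 20 ^ CARD('n)" by simp
  fix f :: "real^'n \<Rightarrow> real" and k :: "int^'n"
  assume H: "H2mix f"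
  define Q where "Q = (\<Prod>i\<in>UNIV. (1 + \<bar>real_of_int (k$i)\<bar>)\<^sup>2)"
  have Q0: "Q \<ge> 0" unfolding Q_def by (intro prod_nonneg) auto
  have N0: "H2mix_norm f \<ge> 0" by (rule norm_nonneg)
  show "cmod (fourier_coeff (tent f) k) * (\<Prod>i\<in>UNIV. (1 + \<bar>real_of_int (k$i)\<bar>)\<^sup>2) \<le> 20 ^ CARD('n) * H2mix_norm f"
  proof (cases "integrable (lebesgue_on unit_cube)
       (\<lambda>x. complex_of_real (tent f x) * cis (- 2 * pi * (\<Sum>i\<in>UNIV. of_int (k$i) * x$i)))")
    case False
    then have "fourier_coeff (tent f) k = 0" unfolding fourier_coeff_def by (rule not_integrable_integral_eq)
    then show ?thesis using N0 by simp
  next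
    case True
    have Lf: "L2_cube f" using H by (simp add: H2mix_def)
    have "cmod (fourier_coeff (tent f) k) = \<bar>integral\<^sup>L (lebesgue_on unit_cube) (\<lambda>x. f x * Gf k x)\<bar>"
      using fourier_tent[OF Lf True] by simp
    then have "cmod (fourier_coeff (tent f) k) * Q
       \<le> (2 ^ CARD('n) * (\<Prod>i\<in>UNIV. 10 / (1 + \<bar>real_of_int (k$i)\<bar>)\<^sup>2) * H2mix_norm f) * Q"
      using main_bound[OF H, of k] Q0 by (simp add: mult_right_mono)
    also have "\<dots> = 2 ^ CARD('n) * ((\<Prod>i\<in>UNIV. 10 / (1 + \<bar>real_of_int (k$i)\<bar>)\<^sup>2) * Q) * H2mix_norm f"
      by (simp add: algebra_simps)
    also have "(\<Prod>i\<in>UNIV. 10 / (1 + \<bar>real_of_int (k$i)\<bar>)\<^sup>2) * Q = 10 ^ CARD('n)"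
    proof -
      have "(\<Prod>i\<in>UNIV. 10 / (1 + \<bar>real_of_int (k$i)\<bar>)\<^sup>2) * Q
          = (\<Prod>i\<in>UNIV. 10 / (1 + \<bar>real_of_int (k$i)\<bar>)\<^sup>2 * (1 + \<bar>real_of_int (k$i)\<bar>)\<^sup>2)"
        unfolding Q_def by (rule prod.distrib[symmetric])
      also have "\<dots> = (\<Prod>i\<in>(UNIV::'n set). 10)"
        by (rule prod.cong) (auto simp: field_simps add_pos_nonneg)
      finally show ?thesis by simp
    qed
    finally show ?thesis by (simp add: Q_def power_mult_distrib[symmetric] mult.assoc)
  qed
qed


end
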